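(* Let $(X,\mathcal{B},\mu)$ be a standard probability space, $r\geq2$ an integer, and $K$ a subset of $\mathfrak{P}_r$. The following are equivalent: (1) $K$ is precompact in $(\mathfrak{P}_r,\rho)$; (2) $K$ has bounded mean complexity; (3) every sequence in $K$ has bounded mean complexity.
   Context: $\mathfrak{P}_r$ is the set of finite measurable partitions of $X$ with at most $r$ atoms (identified mod $0$). $H_\mu(\alpha|\beta)=\sum_{B\in\beta}\mu(B)\sum_{A\in\alpha}-\mu(A|B)\log\mu(A|B)$, $\mu(A|B)=\mu(A\cap B)/\mu(B)$ ($0$ if $\mu(B)=0$), $0\log0=0$; Rokhlin metric $\rho(\alpha,\beta)=H_\mu(\alpha|\beta)+H_\mu(\beta|\alpha)$. For a finite nonempty $E\subset\mathfrak{P}_r$ and $x,y\in X$, $H_E(x,y)=\frac1{|E|}|\{\alpha\in E\colon x,y\text{ lie in different atoms of }\alpha\}|$; $B_{H_E}(x,\varepsilon)=\{y\colon H_E(x,y)<\varepsilon\}$; $\mathcal{C}(E,\varepsilon)=\min\{|D|\colon D\subset X\text{ finite},\ \mu(\bigcup_{x\in D}B_{H_E}(x,\varepsilon))>1-\varepsilon\}$. $K$ has bounded mean complexity if for every $\varepsilon>0$ there is $C\in\mathbb{N}$ with $\mathcal{C}(E,\varepsilon)\le C$ for all finite nonempty $E\subset K$. A sequence $(\alpha_i)_{i\ge1}$ in $\mathfrak{P}_r$ has bounded mean complexity if for every $\varepsilon>0$ there is $C\in\mathbb{N}$ with $\mathcal{C}(\{\alpha_1,\dots,\alpha_n\},\varepsilon)\le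 C$ for all $n\in\mathbb{N}$. *)

theory Defs
  imports "HOL-Probability.Probability"
begin

definition standard_prob_space :: "'a::polish_space measure \<Rightarrow> bool" where
  "standard_prob_space M \<longleftrightarrow> prob_space M \<and> space M = UNIV \<and> sets M = sets borel"

text \<open>Finite measurable partitions of X with at most r atoms (representatives; the
  identification mod 0 is handled via the Rokhlin pseudometric).  A partition is the
  finite set of its atoms.\<close>
definition parts :: "'a measure \<Rightarrow> nat \<Rightarrow> 'a set set set" where
  "parts M r = {\<alpha>. finite \<alpha> \<and> card \<alpha> \<le> r \<and> \<alpha> \<subseteq> sets M \<and> \<Union>\<alpha> = space M
      \<and> (\<forall>A\<in>\<alpha>. \<forall>B\<in>\<alpha>. A \<noteq> B \<longrightarrow> A \<inter> B = {})}"

definition plogp :: "real \<Rightarrow> real" where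
  "plogp x = (if x = 0 then 0 else x * ln x)"

definition cond_meas :: "'a measure \<Rightarrow> 'a set \<Rightarrow> 'a set \<Rightarrow> real" where
  "cond_meas M A B = (if measure M B = 0 then 0 else measure M (A \<inter> B) / measure M B)"

definition cond_entropy :: "'a measure \<Rightarrow> 'a set set \<Rightarrow> 'a set set \<Rightarrow> real" where
  "cond_entropy M \<alpha> \<beta> = (\<Sum>B\<in>\<beta>. measure M B * (\<Sum>A\<in>\<alpha>. - plogp (cond_meas M A B)))"

definition rokhlin :: "'a measure \<Rightarrow> 'a set set \<Rightarrow> 'a set set \<Rightarrow> real" where
  "rokhlin M \<alpha> \<beta> = cond_entropy M \<alpha> \<beta> + cond_entropy M \<beta> \<alpha>"

definition precompact_parts :: "'a measure \<Rightarrow> nat \<Rightarrow> 'a set set set \<Rightarrow> bool" where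
  "precompact_parts M r K \<longleftrightarrow>
     (\<forall>s::nat \<Rightarrow> 'a set set. (\<forall>n. s n \<in> K) \<longrightarrow>
        (\<exists>\<phi> \<beta>. strict_mono \<phi> \<and> \<beta> \<in> parts M r \<and> (\<lambda>n. rokhlin M (s (\<phi> n)) \<beta>) \<longlonglongrightarrow> 0))"

definition H_E :: "'a set set set \<Rightarrow> 'a \<Rightarrow> 'a \<Rightarrow> real" where
  "H_E E x y = real (card {\<alpha>\<in>E. \<not> (\<exists>A\<in>\<alpha>. x \<in> A \<and> y \<in> A)}) / real (card E)"

definition H_ball :: "'a measure \<Rightarrow> 'a set set set \<Rightarrow> 'a \<Rightarrow> real \<Rightarrow> 'a set" where
  "H_ball M E x \<epsilon> = {y \<in> space M. H_E E x y < \<epsilon>}"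

definition mean_complexity :: "'a measure \<Rightarrow> 'a set set set \<Rightarrow> real \<Rightarrow> nat" where
  "mean_complexity M E \<epsilon> = (LEAST n. \<exists>D. finite D \<and> D \<subseteq> space M \<and> card D = n \<and>
       measure M (\<Union>x\<in>D. H_ball M E x \<epsilon>) > 1 - \<epsilon>)"

definition bounded_mean_complexity :: "'a measure \<Rightarrow> 'a set set set \<Rightarrow> bool" where
  "bounded_mean_complexity M K \<longleftrightarrow>
     (\<forall>\<epsilon>>0. \<exists>C::nat. \<forall>E. finite E \<and> E \<noteq> {} \<and> E \<subseteq> K \<longrightarrow> mean_complexity M E \<epsilon> \<le> C)"

definition seq_bounded_mean_complexity :: "'a measure \<Rightarrow> (nat \<Rightarrow> 'a set set) \<Rightarrow> bool" where
  "seq_bounded_mean_complexity M s \<longleftrightarrow>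
     (\<forall>\<epsilon>>0. \<exists>C::nat. \<forall>n\<ge>1. mean_complexity M (s ` {1..n}) \<epsilon> \<le> C)"

end

theory Submission
  imports Defs "HOL-Library.Ramsey"
begin

definition same :: "'a set set \<Rightarrow> 'a \<Rightarrow> 'a \<Rightarrow> bool" where
  "same \<alpha> x y \<longleftrightarrow> (\<exists>A\<in>\<alpha>. x \<in> A \<and> y \<in> A)"

definition pclose :: "'a measure \<Rightarrow> 'a set set \<Rightarrow> 'a set set \<Rightarrow> real \<Rightarrow> bool" where
  "pclose M \<alpha> \<beta> d \<longleftrightarrow> (\<exists>Z\<in>sets M. measure M Z \<le> d \<and>
     (\<forall>x\<in>space M - Z. \<forall>y\<in>space M - Z. same \<alpha> x y \<longleftrightarrow> same \<beta> x y))"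

definition atomset :: "'a set set \<Rightarrow> 'a \<Rightarrow> 'a set" where
  "atomset \<alpha> x = \<Union>{A\<in>\<alpha>. x \<in> A}"

lemma same_sym: "same \<alpha> x y \<longleftrightarrow> same \<alpha> y x"
  unfolding same_def by blast

lemma parts_D:
  assumes "\<alpha> \<in> parts M r"
  shows "finite \<alpha>" "card \<alpha> \<le> r" "\<alpha> \<subseteq> sets M" "\<Union>\<alpha> = space M"
    "\<And>A B. A \<in> \<alpha> \<Longrightarrow> B \<in> \<alpha> \<Longrightarrow> A \<noteq> B \<Longrightarrow> A \<inter> B = {}"
  using assms unfolding parts_def by auto

lemma same_refl: "\<alpha> \<in> parts M r \<Longrightarrow> x \<in> space M \<Longrightarrow> same \<alpha> x x"
  using parts_D(4)[of \<alpha> M r] unfolding same_def by blast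

lemma same_trans: "\<alpha> \<in> parts M r \<Longrightarrow> same \<alpha> x y \<Longrightarrow> same \<alpha> y z \<Longrightarrow> same \<alpha> x z"
  using parts_D(5)[of \<alpha> M r] unfolding same_def by blast

lemma atomset_iff: "y \<in> atomset \<alpha> x \<longleftrightarrow> same \<alpha> x y"
  unfolding atomset_def same_def by blast

lemma atomset_sets: "\<alpha> \<in> parts M r \<Longrightarrow> atomset \<alpha> x \<in> sets M"
  unfolding atomset_def using parts_D(1,3)[of \<alpha> M r]
  by (intro sets.finite_Union) auto

lemma pclose_self: "d \<ge> 0 \<Longrightarrow> pclose M \<alpha> \<alpha> d"
  unfolding pclose_def by (rule bexI[of _ "{}"]) auto

lemma pclose_sym: "pclose M \<alpha> \<beta> d \<Longrightarrow> pclose M \<beta> \<alpha> d"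
  unfolding pclose_def by metis

lemma pclose_trans:
  assumes "pclose M \<alpha> \<beta> d" "pclose M \<beta> \<gamma> e"
  shows "pclose M \<alpha> \<gamma> (d + e)"
proof -
  obtain Z1 where Z1: "Z1 \<in> sets M" "measure M Z1 \<le> d"
    "\<forall>x\<in>space M - Z1. \<forall>y\<in>space M - Z1. same \<alpha> x y \<longleftrightarrow> same \<beta> x y"
    using assms(1) unfolding pclose_def by blast
  obtain Z2 where Z2: "Z2 \<in> sets M" "measure M Z2 \<le> e"
    "\<forall>x\<in>space M - Z2. \<forall>y\<in>space M - Z2. same \<beta> x y \<longleftrightarrow> same \<gamma> x y"
    using assms(2) unfolding pclose_def by blast
  have "measure M (Z1 \<union> Z2) \<le> measure M Z1 + measure M Z2"
    using Z1(1) Z2(1) by (rule measure_Un_le)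
  then show ?thesis unfolding pclose_def using Z1 Z2
    by (intro bexI[of _ "Z1 \<union> Z2"]) auto
qed

lemma plogp_ge:
  assumes "0 \<le> p" "p \<le> m" "0 < m"
  shows "- plogp p \<ge> - p * ln m"
proof (cases "p = 0")
  case True then show ?thesis by (simp add: plogp_def)
next
  case False
  then have "ln p \<le> ln m" using assms by simp
  then show ?thesis using False assms unfolding plogp_def
    by (simp add: mult_left_mono)
qed

context prob_space
begin

lemma parts_sum_inter:
  assumes "\<alpha> \<in> parts M r" "B \<in> events"
  shows "(\<Sum>A\<in>\<alpha>. prob (A \<inter> B)) = prob B"
proof -
  have "(\<Union>A\<in>\<alpha>. A \<inter> B) = B"
    using parts_D(4)[OF assms(1)] sets.sets_into_space[OF assms(2)] by blast
  moreover have "prob (\<Union>A\<in>\<alpha>. A \<inter> B) = (\<Sum>A\<in>\<alpha>. prob (A \<inter> B))"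
  proof (intro finite_measure_finite_Union)
    show "disjoint_family_on (\<lambda>A. A \<inter> B) \<alpha>"
      using parts_D(5)[OF assms(1)] unfolding disjoint_family_on_def by blast
  qed (use parts_D[OF assms(1)] assms(2) in auto)
  ultimately show ?thesis by simp
qed

lemma cond_entropy_half:
  assumes a: "\<alpha> \<in> parts M r" and b: "\<beta> \<in> parts M r"
  shows "\<exists>Z\<in>events. prob Z \<le> cond_entropy M \<alpha> \<beta> \<and>
     (\<forall>x\<in>space M - Z. \<forall>y\<in>space M - Z. same \<beta> x y \<longrightarrow> same \<alpha> x y)"
proof -
  have ane: "\<alpha> \<noteq> {}" using parts_D(4)[OF a] not_empty by auto
  have "\<forall>B\<in>\<beta>. \<exists>A0\<in>\<alpha>. \<forall>A\<in>\<alpha>. prob (A \<inter> B) \<le> prob (A0 \<inter> B)"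
  proof
    fix B assume "B \<in> \<beta>"
    let ?S = "(\<lambda>A. prob (A \<inter> B)) ` \<alpha>"
    have "finite ?S" "?S \<noteq> {}" using parts_D(1)[OF a] ane by auto
    then have "Max ?S \<in> ?S" by (rule Max_in)
    then obtain A0 where "A0 \<in> \<alpha>" "Max ?S = prob (A0 \<inter> B)" by auto
    moreover have "\<forall>A\<in>\<alpha>. prob (A \<inter> B) \<le> Max ?S" using \<open>finite ?S\<close> by auto
    ultimately show "\<exists>A0\<in>\<alpha>. \<forall>A\<in>\<alpha>. prob (A \<inter> B) \<le> prob (A0 \<inter> B)" by metis
  qed
  then obtain f where f: "\<And>B. B \<in> \<beta> \<Longrightarrow> f B \<in> \<alpha>"
    "\<And>B A. B \<in> \<beta> \<Longrightarrow> A \<in> \<alpha> \<Longrightarrow> prob (A \<inter> B) \<le> prob (f B \<inter> B)"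
    by metis
  have key: "prob (B - f B) \<le> prob B * (\<Sum>A\<in>\<alpha>. - plogp (cond_meas M A B))" if B: "B \<in> \<beta>" for B
  proof -
    have Bs: "B \<in> events" using parts_D(3)[OF b] B by auto
    have fBs: "f B \<in> events" using parts_D(3)[OF a] f(1)[OF B] by auto
    have diff: "prob (B - f B) = prob B - prob (f B \<inter> B)"
    proof -
      have "B - f B = B - (f B \<inter> B)" by blast
      then show ?thesis using Bs fBs by (simp add: finite_measure_Diff Int_commute)
    qed
    show ?thesis
    proof (cases "prob B = 0")
      case True
      then have "prob (B - f B) \<le> 0" using Bs fBs by (metis finite_measure_mono Diff_subset)
      then show ?thesis using True by simp
    next
      case False
      then have pB: "prob B > 0" using measure_nonneg[of M B] by linarith
      define p where "p A = prob (A \<inter> B) / prob B" for A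
      have cm: "cond_meas M A B = p A" for A unfolding cond_meas_def p_def using False by simp
      have sum1: "(\<Sum>A\<in>\<alpha>. p A) = 1"
        unfolding p_def using parts_sum_inter[OF a Bs] pB by (simp add: sum_divide_distrib[symmetric])
      define m where "m = p (f B)"
      have pm: "A \<in> \<alpha> \<Longrightarrow> p A \<le> m" for A
        unfolding m_def p_def using f(2)[OF B] pB by (simp add: divide_right_mono)
      have p0: "p A \<ge> 0" for A unfolding p_def by simp
      have m0: "m > 0"
      proof (rule ccontr)
        assume "\<not> m > 0"
        then have "\<forall>A\<in>\<alpha>. p A = 0" using pm p0 by (meson antisym not_less order.trans)
        then have "(\<Sum>A\<in>\<alpha>. p A) = 0" by simp
        then show False using sum1 by simp
      qed
      have "(\<Sum>A\<in>\<alpha>. - plogp (p A)) \<ge> (\<Sum>A\<in>\<alpha>. - p A * ln m)"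
        by (intro sum_mono plogp_ge p0 pm m0)
      moreover have "(\<Sum>A\<in>\<alpha>. - p A * ln m) = - ln m"
        using sum1 by (simp add: sum_negf sum_distrib_right[symmetric])
      moreover have "- ln m \<ge> 1 - m" using ln_le_minus_one[OF m0] by simp
      ultimately have ge: "(\<Sum>A\<in>\<alpha>. - plogp (p A)) \<ge> 1 - m" by linarith
      have "prob (B - f B) = prob B * (1 - m)"
        unfolding diff m_def p_def using pB by (simp add: field_simps)
      also have "\<dots> \<le> prob B * (\<Sum>A\<in>\<alpha>. - plogp (p A))"
        using ge pB by (intro mult_left_mono) auto
      finally show ?thesis by (simp add: cm)
    qed
  qed
  define Z where "Z = (\<Union>B\<in>\<beta>. B - f B)"
  have Zs: "Z \<in> events" unfolding Z_def using parts_D(1,3)[OF b] f(1) parts_D(3)[OF a]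
    by (intro sets.finite_UN) auto
  have "prob Z \<le> (\<Sum>B\<in>\<beta>. prob (B - f B))" unfolding Z_def
    using parts_D(1,3)[OF b] f(1) parts_D(3)[OF a]
    by (intro measure_UNION_le) auto
  also have "\<dots> \<le> cond_entropy M \<alpha> \<beta>" unfolding cond_entropy_def
    by (intro sum_mono key)
  finally have "prob Z \<le> cond_entropy M \<alpha> \<beta>" .
  moreover have "same \<alpha> x y" if xy: "x \<in> space M - Z" "y \<in> space M - Z" "same \<beta> x y" for x y
  proof -
    obtain B where "B \<in> \<beta>" "x \<in> B" "y \<in> B" using xy(3) unfolding same_def by blast
    then have "x \<in> f B" "y \<in> f B" using xy(1,2) unfolding Z_def by auto
    then show ?thesis unfolding same_def using f(1)[OF \<open>B \<in> \<beta>\<close>] by blast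
  qed
  ultimately show ?thesis using Zs by blast
qed

lemma rokhlin_pclose:
  assumes a: "\<alpha> \<in> parts M r" and b: "\<beta> \<in> parts M r"
  shows "pclose M \<alpha> \<beta> (rokhlin M \<alpha> \<beta>)"
proof -
  obtain Z1 where Z1: "Z1 \<in> events" "prob Z1 \<le> cond_entropy M \<alpha> \<beta>"
     "\<forall>x\<in>space M - Z1. \<forall>y\<in>space M - Z1. same \<beta> x y \<longrightarrow> same \<alpha> x y"
    using cond_entropy_half[OF a b] by blast
  obtain Z2 where Z2: "Z2 \<in> events" "prob Z2 \<le> cond_entropy M \<beta> \<alpha>"
     "\<forall>x\<in>space M - Z2. \<forall>y\<in>space M - Z2. same \<alpha> x y \<longrightarrow> same \<beta> x y"
    using cond_entropy_half[OF b a] by blast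
  have "prob (Z1 \<union> Z2) \<le> prob Z1 + prob Z2" using Z1(1) Z2(1) by (rule measure_Un_le)
  then show ?thesis unfolding pclose_def rokhlin_def using Z1 Z2
    by (intro bexI[of _ "Z1 \<union> Z2"]) auto
qed

end

lemma plogp_le1:
  assumes "0 \<le> p" "p \<le> 1" shows "- plogp p \<le> 1 - p"
proof (cases "p = 0")
  case True then show ?thesis by (simp add: plogp_def)
next
  case False
  then have p: "p > 0" using assms by simp
  have "ln (1/p) \<le> 1/p - 1" using p by (intro ln_le_minus_one) simp
  then have "p * ln (1/p) \<le> p * (1/p - 1)" using p by (intro mult_left_mono) auto
  then show ?thesis using p unfolding plogp_def by (simp add: ln_div right_diff_distrib)
qed

lemma plogp_le2:
  assumes "0 \<le> p" "p \<le> 1" shows "- plogp p \<le> 2 * sqrt p"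
proof (cases "p = 0")
  case True then show ?thesis by (simp add: plogp_def)
next
  case False
  then have p: "p > 0" using assms by simp
  have sp: "sqrt p > 0" using p by simp
  have "ln (1 / sqrt p) \<le> 1 / sqrt p - 1" using sp by (intro ln_le_minus_one) simp
  moreover have "ln p = 2 * ln (sqrt p)" using p by (simp add: ln_sqrt)
  ultimately have "- ln p \<le> 2 * (1 / sqrt p - 1)" using sp by (simp add: ln_div)
  then have "p * (- ln p) \<le> p * (2 * (1 / sqrt p - 1))" using p by (intro mult_left_mono) auto
  also have "\<dots> \<le> p * (2 / sqrt p)" using p by (intro mult_left_mono) auto
  also have "\<dots> = 2 * sqrt p" using p by (simp add: field_simps real_sqrt_mult[symmetric]) 
  finally show ?thesis using p unfolding plogp_def by simp
qed

lemma plogp_le3: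
  assumes "0 \<le> p" "p \<le> 1" "p \<le> s \<or> 1 - p \<le> s" shows "- plogp p \<le> s + 2 * sqrt s"
proof -
  have s: "s \<ge> 0" using assms by auto
  show ?thesis
  proof (cases "p \<le> s")
    case True
    then have "sqrt p \<le> sqrt s" by simp
    moreover have "sqrt s \<ge> 0" using s by simp
    ultimately show ?thesis using plogp_le2[OF assms(1,2)] s by linarith
  next
    case False
    then show ?thesis using plogp_le1[OF assms(1,2)] assms(3) s real_sqrt_ge_zero[OF s] by linarith
  qed
qed

context prob_space
begin

lemma cond_entropy_le:
  assumes a: "\<alpha> \<in> parts M r" and b: "\<beta> \<in> parts M r" and Z: "Z \<in> events" "prob Z \<le> \<eta>"
    and ag: "\<forall>x\<in>space M - Z. \<forall>y\<in>space M - Z. same \<beta> x y \<longrightarrow> same \<alpha> x y"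
  shows "cond_entropy M \<alpha> \<beta> \<le> real r * real r * (\<eta> + 2 * sqrt \<eta>)"
proof -
  have eta: "\<eta> \<ge> 0" using Z(2) measure_nonneg[of M Z] by linarith
  have trm: "prob B * (\<Sum>A\<in>\<alpha>. - plogp (cond_meas M A B)) \<le> real r * (\<eta> + 2 * sqrt \<eta>)"
    if B: "B \<in> \<beta>" for B
  proof (cases "prob B = 0")
    case True then show ?thesis using eta by simp
  next
    case False
    then have pB: "prob B > 0" using measure_nonneg[of M B] by linarith
    have Bs: "B \<in> events" using parts_D(3)[OF b] B by auto
    have Bsp: "B \<subseteq> space M" using parts_D(4)[OF b] B by auto
    obtain A0 where A0: "A0 \<in> \<alpha>" "B - Z \<subseteq> A0"
    proof (cases "B - Z = {}")
      case True
      obtain A0 where "A0 \<in> \<alpha>" using parts_D(4)[OF a] not_empty by auto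
      then show ?thesis using that True by blast
    next
      case False
      then obtain x where x: "x \<in> B" "x \<notin> Z" by auto
      then have "x \<in> space M" using Bsp by auto
      then obtain A0 where A0: "A0 \<in> \<alpha>" "x \<in> A0" using parts_D(4)[OF a] by auto
      have "y \<in> A0" if y: "y \<in> B - Z" for y
      proof -
        have "same \<beta> x y" unfolding same_def using B x y by blast
        then have "same \<alpha> x y" using ag x y Bsp by auto
        then obtain A where "A \<in> \<alpha>" "x \<in> A" "y \<in> A" unfolding same_def by blast
        then show ?thesis using A0 parts_D(5)[OF a] by blast
      qed
      then show ?thesis using that A0(1) by blast
    qed
    define s where "s = prob (B \<inter> Z) / prob B"
    have s0: "s \<ge> 0" unfolding s_def by simp
    have cm01: "0 \<le> cond_meas M A B" "cond_meas M A B \<le> 1" if "A \<in> \<alpha>" for A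
    proof -
      have "A \<inter> B \<in> events" using that parts_D(3)[OF a] Bs by auto
      then have "prob (A \<inter> B) \<le> prob B" using Bs by (intro finite_measure_mono) auto
      then show "0 \<le> cond_meas M A B" "cond_meas M A B \<le> 1"
        unfolding cond_meas_def using pB by auto
    qed
    have cmb: "cond_meas M A B \<le> s \<or> 1 - cond_meas M A B \<le> s" if A: "A \<in> \<alpha>" for A
    proof (cases "A = A0")
      case True
      have As: "A0 \<inter> B \<in> events" using A0 parts_D(3)[OF a] Bs by auto
      have "prob B - prob (A0 \<inter> B) = prob (B - (A0 \<inter> B))"
        using As Bs by (simp add: finite_measure_Diff)
      also have "\<dots> \<le> prob (B \<inter> Z)" using A0 Bs Z(1) by (intro finite_measure_mono) auto
      finally have "prob B - prob (A0 \<inter> B) \<le> prob (B \<inter> Z)" .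
      then have "(prob B - prob (A0 \<inter> B)) / prob B \<le> prob (B \<inter> Z) / prob B"
        using pB by (intro divide_right_mono) auto
      moreover have "(prob B - prob (A0 \<inter> B)) / prob B = 1 - cond_meas M A0 B"
        unfolding cond_meas_def using pB by (simp add: diff_divide_distrib)
      ultimately have "1 - cond_meas M A0 B \<le> s" unfolding s_def by simp
      then show ?thesis using True by simp
    next
      case False
      have "A \<inter> B \<subseteq> B \<inter> Z" using A0 A False parts_D(5)[OF a] by blast
      then have "prob (A \<inter> B) \<le> prob (B \<inter> Z)" using Bs Z(1) by (intro finite_measure_mono) auto
      then have "cond_meas M A B \<le> s" unfolding cond_meas_def s_def using pB
        by (simp add: divide_right_mono)
      then show ?thesis by simp
    qed
    have "(\<Sum>A\<in>\<alpha>. - plogp (cond_meas M A B)) \<le> (\<Sum>A\<in>\<alpha>. s + 2 * sqrt s)"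
      by (intro sum_mono plogp_le3 cm01 cmb)
    also have "\<dots> = card \<alpha> * (s + 2 * sqrt s)" by simp
    also have "\<dots> \<le> r * (s + 2 * sqrt s)" using parts_D(2)[OF a] s0
      by (intro mult_right_mono) auto
    finally have 1: "prob B * (\<Sum>A\<in>\<alpha>. - plogp (cond_meas M A B)) \<le> prob B * (r * (s + 2 * sqrt s))"
      using pB by (intro mult_left_mono) auto
    have pBZ: "prob (B \<inter> Z) \<le> \<eta>" using Z by (meson Int_lower2 finite_measure_mono order.trans)
    have "prob B * s = prob (B \<inter> Z)" unfolding s_def using pB by simp
    moreover have "prob B * sqrt s = sqrt (prob B * prob (B \<inter> Z))"
      unfolding s_def using pB by (simp add: real_sqrt_mult real_sqrt_divide field_simps)
    moreover have "sqrt (prob B * prob (B \<inter> Z)) \<le> sqrt \<eta>"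
    proof -
      have "prob B * prob (B \<inter> Z) \<le> 1 * \<eta>" using pBZ by (intro mult_mono) auto
      then show ?thesis by simp
    qed
    ultimately have q1: "prob B * s \<le> \<eta>" and q2: "prob B * sqrt s \<le> sqrt \<eta>" using pBZ by auto
    have e1: "prob B * (r * (s + 2 * sqrt s)) = r * (prob B * s) + 2 * r * (prob B * sqrt s)"
      by (simp add: algebra_simps)
    have "r * (prob B * s) \<le> r * \<eta>" using q1 by (intro mult_left_mono) auto
    moreover have "2 * r * (prob B * sqrt s) \<le> 2 * r * sqrt \<eta>" using q2 by (intro mult_left_mono) auto
    ultimately have "prob B * (r * (s + 2 * sqrt s)) \<le> r * (\<eta> + 2 * sqrt \<eta>)"
      unfolding e1 by (simp add: algebra_simps)
    with 1 show ?thesis by linarith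
  qed
  have "cond_entropy M \<alpha> \<beta> \<le> (\<Sum>B\<in>\<beta>. real r * (\<eta> + 2 * sqrt \<eta>))"
    unfolding cond_entropy_def by (intro sum_mono trm)
  also have "\<dots> = card \<beta> * (real r * (\<eta> + 2 * sqrt \<eta>))" by simp
  also have "\<dots> \<le> r * (real r * (\<eta> + 2 * sqrt \<eta>))" using parts_D(2)[OF b] eta
    by (intro mult_right_mono) auto
  finally show ?thesis by simp
qed

lemma pclose_rokhlin:
  assumes a: "\<alpha> \<in> parts M r" and b: "\<beta> \<in> parts M r" and c: "pclose M \<alpha> \<beta> \<eta>"
  shows "rokhlin M \<alpha> \<beta> \<le> 2 * (real r * real r * (\<eta> + 2 * sqrt \<eta>))"
proof -
  obtain Z where Z: "Z \<in> events" "prob Z \<le> \<eta>"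
    "\<forall>x\<in>space M - Z. \<forall>y\<in>space M - Z. same \<alpha> x y \<longleftrightarrow> same \<beta> x y"
    using c unfolding pclose_def by blast
  have "cond_entropy M \<alpha> \<beta> \<le> real r * real r * (\<eta> + 2 * sqrt \<eta>)"
    using Z by (intro cond_entropy_le[OF a b]) auto
  moreover have "cond_entropy M \<beta> \<alpha> \<le> real r * real r * (\<eta> + 2 * sqrt \<eta>)"
    using Z by (intro cond_entropy_le[OF b a]) auto
  ultimately show ?thesis unfolding rokhlin_def by linarith
qed

lemma cond_entropy_nonneg:
  assumes a: "\<alpha> \<in> parts M r" shows "cond_entropy M \<alpha> \<beta> \<ge> 0"
  unfolding cond_entropy_def
proof (intro sum_nonneg mult_nonneg_nonneg measure_nonneg)
  fix B A assume A: "A \<in> \<alpha>"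
  have "A \<inter> B \<subseteq> B" by auto
  have "0 \<le> cond_meas M A B" "cond_meas M A B \<le> 1"
  proof -
    show "0 \<le> cond_meas M A B" unfolding cond_meas_def by simp
    show "cond_meas M A B \<le> 1"
    proof (cases "prob B = 0")
      case False
      have "B \<in> events" using False measure_notin_sets by blast
      then have "prob (A \<inter> B) \<le> prob B"
        by (intro finite_measure_mono) auto
      moreover have "prob B > 0" using False measure_nonneg[of M B] by linarith
      ultimately show ?thesis unfolding cond_meas_def using False
        by (simp add: divide_le_eq_1)
    qed (simp add: cond_meas_def)
  qed
  then have "- plogp (cond_meas M A B) \<ge> 0"
  proof -
    assume h: "0 \<le> cond_meas M A B" "cond_meas M A B \<le> 1"
    show ?thesis using h unfolding plogp_def
      by (auto simp: mult_nonneg_nonpos ln_le_zero_iff intro!: mult_nonneg_nonpos)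
  qed
  then show "0 \<le> - plogp (cond_meas M A B)" .
qed

end

lemma card_filter_sum:
  "finite E \<Longrightarrow> real (card {a\<in>E. P a}) = (\<Sum>a\<in>E. if P a then 1 else 0)"
  by (simp add: sum.If_cases Int_def conj_commute)

lemma join_reps:
  assumes "finite F" "\<forall>\<alpha>\<in>F. finite \<alpha>"
  shows "\<exists>D\<subseteq>G. finite D \<and> card D \<le> 2 ^ card (\<Union>F) \<and>
           (\<forall>y\<in>G. \<exists>x\<in>D. \<forall>\<alpha>\<in>F. \<forall>A\<in>\<alpha>. x \<in> A \<longleftrightarrow> y \<in> A)"
proof -
  define key where "key y = {A\<in>\<Union>F. y \<in> A}" for y
  define pick where "pick k = (SOME y. y \<in> G \<and> key y = k)" for k
  define D where "D = pick ` (key ` G)"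
  have finU: "finite (\<Union>F)" using assms by auto
  have pk: "pick (key y) \<in> G \<and> key (pick (key y)) = key y" if "y \<in> G" for y
    unfolding pick_def using that by (metis (mono_tags, lifting) someI)
  have "D \<subseteq> G" unfolding D_def using pk by auto
  moreover have "key ` G \<subseteq> Pow (\<Union>F)" unfolding key_def by auto
  then have fk: "finite (key ` G)" and ck: "card (key ` G) \<le> card (Pow (\<Union>F))"
    using finU by (auto intro: finite_subset card_mono)
  then have "finite D" "card D \<le> 2 ^ card (\<Union>F)" unfolding D_def
    using card_image_le[OF fk, of pick] finU by (auto simp: card_Pow)
  moreover have "\<exists>x\<in>D. \<forall>\<alpha>\<in>F. \<forall>A\<in>\<alpha>. x \<in> A \<longleftrightarrow> y \<in> A" if "y \<in> G" for y
  proof (intro bexI[of _ "pick (key y)"])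
    show "pick (key y) \<in> D" unfolding D_def using that by auto
    have "key (pick (key y)) = key y" using pk[OF that] by simp
    then show "\<forall>\<alpha>\<in>F. \<forall>A\<in>\<alpha>. pick (key y) \<in> A \<longleftrightarrow> y \<in> A" unfolding key_def by blast
  qed
  ultimately show ?thesis by blast
qed

context prob_space
begin

lemma H_E_sum:
  assumes "finite E" and that: "y \<in> space M"
  shows "H_E E x y = (\<Sum>\<alpha>\<in>E. indicator (space M - atomset \<alpha> x) y) / real (card E)"
proof -
  have "real (card {\<alpha>\<in>E. \<not> (\<exists>A\<in>\<alpha>. x \<in> A \<and> y \<in> A)}) =
        (\<Sum>\<alpha>\<in>E. if \<not> (\<exists>A\<in>\<alpha>. x \<in> A \<and> y \<in> A) then 1 else 0)"
    using assms(1) by (rule card_filter_sum)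
  also have "\<dots> = (\<Sum>\<alpha>\<in>E. indicator (space M - atomset \<alpha> x) y)"
    using that by (intro sum.cong) (auto simp: indicator_def atomset_iff same_def)
  finally show ?thesis unfolding H_E_def by simp
qed

lemma H_E_meas:
  assumes "finite E" "E \<subseteq> parts M r"
  shows "(\<lambda>y. H_E E x y) \<in> borel_measurable M"
proof -
  have "(\<lambda>y. (\<Sum>\<alpha>\<in>E. indicator (space M - atomset \<alpha> x) y) / real (card E) :: real) \<in> borel_measurable M"
  proof (rule borel_measurable_divide)
    show "(\<lambda>y. (\<Sum>\<alpha>\<in>E. indicator (space M - atomset \<alpha> x) y) :: real) \<in> borel_measurable M"
    proof (rule borel_measurable_sum)
      fix \<alpha> assume "\<alpha> \<in> E"
      then have "\<alpha> \<in> parts M r" using assms(2) by (rule rev_subsetD)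
      then have "atomset \<alpha> x \<in> events" by (rule atomset_sets)
      then have "space M - atomset \<alpha> x \<in> events" by (rule sets.Diff[OF sets.top])
      then show "(\<lambda>y. indicator (space M - atomset \<alpha> x) y :: real) \<in> borel_measurable M"
        by (rule borel_measurable_indicator)
    qed
  qed (rule borel_measurable_const)
  moreover have "(\<lambda>y. H_E E x y) \<in> borel_measurable M \<longleftrightarrow>
    (\<lambda>y. (\<Sum>\<alpha>\<in>E. indicator (space M - atomset \<alpha> x) y) / real (card E) :: real) \<in> borel_measurable M"
    by (rule measurable_cong) (rule H_E_sum[OF assms(1)])
  ultimately show ?thesis by (simp only:)
qed

lemma H_ball_sets:
  assumes "finite E" "E \<subseteq> parts M r"
  shows "H_ball M E x e \<in> events"
  unfolding H_ball_def using H_E_meas[OF assms] borel_measurable_const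
  by (rule borel_measurable_less)

lemma sum_ind_card:
  assumes "finite E"
  shows "(\<Sum>a\<in>E. indicator (V \<inter> S a) y :: real) = indicator V y * real (card {a\<in>E. y \<in> S a})"
  unfolding card_filter_sum[OF assms] sum_distrib_left
  by (rule sum.cong) (auto simp: indicator_def)

lemma integ_ind: "A \<in> events \<Longrightarrow> integrable M (indicator A :: 'a \<Rightarrow> real)"
  by (intro integrable_real_indicator) (auto simp: less_top[symmetric])

lemma integ_ind2: "A \<in> events \<Longrightarrow> integrable M (\<lambda>y. c * indicator A y :: real)"
  using integ_ind by (intro integrable_mult_right) auto

lemma dc_upper:
  assumes E: "finite E" and S: "\<And>a. a \<in> E \<Longrightarrow> S a \<in> events" and V: "V \<in> events"
    and c: "\<And>y. y \<in> V \<Longrightarrow> real (card {a\<in>E. y \<in> S a}) \<le> c"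
  shows "(\<Sum>a\<in>E. prob (V \<inter> S a)) \<le> c * prob V"
proof -
  have i: "prob (V \<inter> S a) = integral\<^sup>L M (indicator (V \<inter> S a))" if "a \<in> E" for a
    using S[OF that] V by (simp add: Int_absorb2 sets.sets_into_space)
  have sumi: "(\<Sum>a\<in>E. prob (V \<inter> S a)) = integral\<^sup>L M (\<lambda>y. \<Sum>a\<in>E. indicator (V \<inter> S a) y)"
  proof -
    have "(\<Sum>a\<in>E. prob (V \<inter> S a)) = (\<Sum>a\<in>E. integral\<^sup>L M (indicator (V \<inter> S a)))"
      by (intro sum.cong refl i)
    also have "\<dots> = integral\<^sup>L M (\<lambda>y. \<Sum>a\<in>E. indicator (V \<inter> S a) y)"
      by (rule Bochner_Integration.integral_sum[symmetric], rule integ_ind) (use S V in auto)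
    finally show ?thesis .
  qed
  also have "\<dots> \<le> integral\<^sup>L M (\<lambda>y. c * indicator V y)"
  proof (intro integral_mono)
    show "integrable M (\<lambda>y. \<Sum>a\<in>E. indicator (V \<inter> S a) y :: real)"
      by (rule Bochner_Integration.integrable_sum, rule integ_ind) (use S V in auto)
    show "integrable M (\<lambda>y. c * indicator V y :: real)" using V by (rule integ_ind2)
    fix y assume "y \<in> space M"
    have "(\<Sum>a\<in>E. indicator (V \<inter> S a) y :: real) = (if y \<in> V then real (card {a\<in>E. y \<in> S a}) else 0)"
      by (simp only: sum_ind_card[OF E]) (simp add: indicator_def)
    then show "(\<Sum>a\<in>E. indicator (V \<inter> S a) y :: real) \<le> c * indicator V y"
      using c by (simp add: indicator_def)
  qed
  also have "\<dots> = c * prob V" using V by simp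
  finally show ?thesis .
qed

lemma dc_lower:
  assumes E: "finite E" and S: "\<And>a. a \<in> E \<Longrightarrow> S a \<in> events" and V: "V \<in> events"
    and c: "\<And>y. y \<in> V \<Longrightarrow> c \<le> real (card {a\<in>E. y \<in> S a})"
  shows "c * prob V \<le> (\<Sum>a\<in>E. prob (V \<inter> S a))"
proof -
  have i: "prob (V \<inter> S a) = integral\<^sup>L M (indicator (V \<inter> S a))" if "a \<in> E" for a
    using S[OF that] V by (simp add: Int_absorb2 sets.sets_into_space)
  have sumi: "(\<Sum>a\<in>E. prob (V \<inter> S a)) = integral\<^sup>L M (\<lambda>y. \<Sum>a\<in>E. indicator (V \<inter> S a) y)"
  proof -
    have "(\<Sum>a\<in>E. prob (V \<inter> S a)) = (\<Sum>a\<in>E. integral\<^sup>L M (indicator (V \<inter> S a)))"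
      by (intro sum.cong refl i)
    also have "\<dots> = integral\<^sup>L M (\<lambda>y. \<Sum>a\<in>E. indicator (V \<inter> S a) y)"
      by (rule Bochner_Integration.integral_sum[symmetric], rule integ_ind) (use S V in auto)
    finally show ?thesis .
  qed
  have "c * prob V = integral\<^sup>L M (\<lambda>y. c * indicator V y)" using V by simp
  also have "\<dots> \<le> integral\<^sup>L M (\<lambda>y. \<Sum>a\<in>E. indicator (V \<inter> S a) y)"
  proof (intro integral_mono)
    show "integrable M (\<lambda>y. \<Sum>a\<in>E. indicator (V \<inter> S a) y :: real)"
      by (rule Bochner_Integration.integrable_sum, rule integ_ind) (use S V in auto)
    show "integrable M (\<lambda>y. c * indicator V y :: real)" using V by (rule integ_ind2)
    fix y assume "y \<in> space M"
    have "(\<Sum>a\<in>E. indicator (V \<inter> S a) y :: real) = (if y \<in> V then real (card {a\<in>E. y \<in> S a}) else 0)"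
      by (simp only: sum_ind_card[OF E]) (simp add: indicator_def)
    then show "c * indicator V y \<le> (\<Sum>a\<in>E. indicator (V \<inter> S a) y :: real)"
      using c by (simp add: indicator_def)
  qed
  also have "\<dots> = (\<Sum>a\<in>E. prob (V \<inter> S a))"
    by (rule sumi[symmetric])
  finally show ?thesis .
qed

end

lemma pclose_mono: "pclose M \<alpha> \<beta> d \<Longrightarrow> d \<le> d' \<Longrightarrow> pclose M \<alpha> \<beta> d'"
proof -
  assume a: "pclose M \<alpha> \<beta> d" and b: "d \<le> d'"
  then obtain Z where "Z \<in> sets M" "measure M Z \<le> d"
    "\<forall>x\<in>space M - Z. \<forall>y\<in>space M - Z. same \<alpha> x y \<longleftrightarrow> same \<beta> x y"
    unfolding pclose_def by blast
  then show ?thesis unfolding pclose_def using b by (intro bexI[of _ Z]) auto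
qed

context prob_space
begin

lemma net_from_precompact:
  assumes pc: "precompact_parts M r K" and K: "K \<subseteq> parts M r" and d: "\<delta> > 0"
  shows "\<exists>F. finite F \<and> F \<subseteq> K \<and> (\<forall>\<alpha>\<in>K. \<exists>\<beta>\<in>F. pclose M \<alpha> \<beta> \<delta>)"
proof (rule ccontr)
  assume nt: "\<not> ?thesis"
  have H: "\<forall>F. finite F \<and> F \<subseteq> K \<longrightarrow> (\<exists>\<alpha>\<in>K. \<forall>\<beta>\<in>F. \<not> pclose M \<alpha> \<beta> \<delta>)"
  proof (intro allI impI)
    fix F assume F: "finite F \<and> F \<subseteq> K"
    show "\<exists>\<alpha>\<in>K. \<forall>\<beta>\<in>F. \<not> pclose M \<alpha> \<beta> \<delta>"
    proof (rule ccontr)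
      assume "\<not> (\<exists>\<alpha>\<in>K. \<forall>\<beta>\<in>F. \<not> pclose M \<alpha> \<beta> \<delta>)"
      then have "\<forall>\<alpha>\<in>K. \<exists>\<beta>\<in>F. pclose M \<alpha> \<beta> \<delta>" by simp
      then have "\<exists>F. finite F \<and> F \<subseteq> K \<and> (\<forall>\<alpha>\<in>K. \<exists>\<beta>\<in>F. pclose M \<alpha> \<beta> \<delta>)"
        using F by (intro exI[of _ F]) simp
      then show False using nt by (rule notE[rotated])
    qed
  qed
  have "\<forall>F. \<exists>a. finite F \<and> F \<subseteq> K \<longrightarrow> a \<in> K \<and> (\<forall>\<beta>\<in>F. \<not> pclose M a \<beta> \<delta>)"
  proof (intro allI)
    fix F
    show "\<exists>a. finite F \<and> F \<subseteq> K \<longrightarrow> a \<in> K \<and> (\<forall>\<beta>\<in>F. \<not> pclose M a \<beta> \<delta>)"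
    proof (cases "finite F \<and> F \<subseteq> K")
      case True
      then obtain a where "a \<in> K" "\<forall>\<beta>\<in>F. \<not> pclose M a \<beta> \<delta>" using H by auto
      then show ?thesis by auto
    qed auto
  qed
  then obtain g where g0: "\<forall>F. finite F \<and> F \<subseteq> K \<longrightarrow> g F \<in> K \<and> (\<forall>\<beta>\<in>F. \<not> pclose M (g F) \<beta> \<delta>)"
    by (rule choice[THEN exE])
  have g: "g F \<in> K \<and> (\<forall>\<beta>\<in>F. \<not> pclose M (g F) \<beta> \<delta>)" if "finite F \<and> F \<subseteq> K" for F
    using g0 that by simp
  define W where "W = rec_nat {} (\<lambda>n S. insert (g S) S)"
  have W0: "W 0 = {}" and WS: "W (Suc n) = insert (g (W n)) (W n)" for n
    unfolding W_def by simp_all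
  have Winv: "finite (W n) \<and> W n \<subseteq> K" for n
  proof (induction n)
    case 0 then show ?case by (simp add: W0)
  next
    case (Suc n) then show ?case using g[of "W n"] by (simp add: WS)
  qed
  define u where "u n = g (W n)" for n
  have uK: "u n \<in> K" for n unfolding u_def using g[OF Winv[of n]] by simp
  have Wu: "m < n \<Longrightarrow> u m \<in> W n" for m n
  proof (induction n)
    case 0 then show ?case by simp
  next
    case (Suc n) then show ?case by (cases "m = n") (auto simp: WS u_def)
  qed
  have sep: "m < n \<Longrightarrow> \<not> pclose M (u n) (u m) \<delta>" for m n
    using g[OF Winv[of n]] Wu[of m n] unfolding u_def by simp
  have ex: "\<exists>\<phi> \<beta>. strict_mono \<phi> \<and> \<beta> \<in> parts M r \<and> (\<lambda>n. rokhlin M (u (\<phi> n)) \<beta>) \<longlonglongrightarrow> 0"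
    by (rule pc[unfolded precompact_parts_def, rule_format]) (rule uK)
  then obtain \<phi> \<beta> where \<phi>: "strict_mono \<phi>" and \<beta>: "\<beta> \<in> parts M r"
    and lim: "(\<lambda>n. rokhlin M (u (\<phi> n)) \<beta>) \<longlonglongrightarrow> 0"
    by (elim exE conjE)
  have "\<delta> / 2 > 0" using d by simp
  from LIMSEQ_D[OF lim this] obtain N where N: "\<And>n. n \<ge> N \<Longrightarrow> norm (rokhlin M (u (\<phi> n)) \<beta> - 0) < \<delta> / 2"
    by blast
  have u1: "u (\<phi> N) \<in> parts M r" and u2: "u (\<phi> (Suc N)) \<in> parts M r"
    by (rule subsetD[OF K uK])+
  have "pclose M (u (\<phi> (Suc N))) \<beta> (rokhlin M (u (\<phi> (Suc N))) \<beta>)" by (rule rokhlin_pclose[OF u2 \<beta>])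
  moreover have "pclose M \<beta> (u (\<phi> N)) (rokhlin M (u (\<phi> N)) \<beta>)"
    by (rule pclose_sym, rule rokhlin_pclose[OF u1 \<beta>])
  ultimately have "pclose M (u (\<phi> (Suc N))) (u (\<phi> N)) (rokhlin M (u (\<phi> (Suc N))) \<beta> + rokhlin M (u (\<phi> N)) \<beta>)"
    by (rule pclose_trans)
  moreover have "rokhlin M (u (\<phi> (Suc N))) \<beta> + rokhlin M (u (\<phi> N)) \<beta> \<le> \<delta>"
    using N[of N] N[of "Suc N"] by simp
  ultimately have "pclose M (u (\<phi> (Suc N))) (u (\<phi> N)) \<delta>" by (rule pclose_mono)
  moreover have "\<phi> N < \<phi> (Suc N)" using \<phi> by (simp add: strict_mono_def)
  ultimately show False using sep[of "\<phi> N" "\<phi> (Suc N)"] by simp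
qed

lemma mc_le:
  assumes "finite D" "D \<subseteq> space M" "measure M (\<Union>x\<in>D. H_ball M E x e) > 1 - e"
  shows "mean_complexity M E e \<le> card D"
  unfolding mean_complexity_def using assms by (intro Least_le) blast

lemma bmc_from_net:
  assumes K: "K \<subseteq> parts M r"
    and net: "\<And>\<delta>. \<delta> > 0 \<Longrightarrow> \<exists>F. finite F \<and> F \<subseteq> K \<and> (\<forall>\<alpha>\<in>K. \<exists>\<beta>\<in>F. pclose M \<alpha> \<beta> \<delta>)"
    and e: "\<epsilon> > 0"
  shows "\<exists>C::nat. \<forall>E. finite E \<and> E \<noteq> {} \<and> E \<subseteq> K \<longrightarrow> mean_complexity M E \<epsilon> \<le> C"
proof -
  define \<delta> where "\<delta> = \<epsilon> * \<epsilon> / 4"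
  have d: "\<delta> > 0" unfolding \<delta>_def using e by simp
  obtain F where F: "finite F" "F \<subseteq> K" "\<forall>\<alpha>\<in>K. \<exists>\<beta>\<in>F. pclose M \<alpha> \<beta> \<delta>" using net[OF d] by blast
  have Fp: "\<forall>\<alpha>\<in>F. finite \<alpha>"
  proof
    fix \<alpha> assume "\<alpha> \<in> F"
    then show "finite \<alpha>" by (rule parts_D(1)[OF subsetD[OF K subsetD[OF F(2)]]])
  qed
  show ?thesis
  proof (intro exI allI impI)
    fix E assume E: "finite E \<and> E \<noteq> {} \<and> E \<subseteq> K"
    define N where "N = real (card E)"
    have Npos: "N > 0" unfolding N_def using E by (simp add: card_gt_0_iff)
    have "\<forall>\<alpha>\<in>E. \<exists>\<beta>\<in>F. \<exists>Z\<in>events. prob Z \<le> \<delta> \<and>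
        (\<forall>x\<in>space M - Z. \<forall>y\<in>space M - Z. same \<alpha> x y \<longleftrightarrow> same \<beta> x y)"
      using F(3) E unfolding pclose_def by blast
    then obtain bt Z where bt: "\<And>\<alpha>. \<alpha> \<in> E \<Longrightarrow> bt \<alpha> \<in> F"
      and Z: "\<And>\<alpha>. \<alpha> \<in> E \<Longrightarrow> Z \<alpha> \<in> events" "\<And>\<alpha>. \<alpha> \<in> E \<Longrightarrow> prob (Z \<alpha>) \<le> \<delta>"
      "\<And>\<alpha>. \<alpha> \<in> E \<Longrightarrow> \<forall>x\<in>space M - Z \<alpha>. \<forall>y\<in>space M - Z \<alpha>. same \<alpha> x y \<longleftrightarrow> same (bt \<alpha>) x y"
      by metis
    define cnt where "cnt y = real (card {\<alpha>\<in>E. y \<in> Z \<alpha>})" for y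
    have cnt_eq: "cnt y = (\<Sum>\<alpha>\<in>E. indicator (Z \<alpha>) y)" for y
    proof -
      have "cnt y = (\<Sum>\<alpha>\<in>E. if y \<in> Z \<alpha> then 1 else 0)" unfolding cnt_def
        by (rule card_filter_sum) (use E in blast)
      also have "\<dots> = (\<Sum>\<alpha>\<in>E. indicator (Z \<alpha>) y)" by (rule sum.cong) (auto simp: indicator_def)
      finally show ?thesis .
    qed
    define Bad where "Bad = {y\<in>space M. N * \<epsilon> / 2 \<le> cnt y}"
    have Bads: "Bad \<in> events" unfolding Bad_def cnt_eq
    proof (rule borel_measurable_le)
      show "(\<lambda>y. \<Sum>\<alpha>\<in>E. indicator (Z \<alpha>) y :: real) \<in> borel_measurable M"
      proof (rule borel_measurable_sum)
        fix \<alpha> assume "\<alpha> \<in> E"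
        then show "(\<lambda>y. indicator (Z \<alpha>) y :: real) \<in> borel_measurable M"
          using Z(1) by (intro borel_measurable_indicator) auto
      qed
    qed (rule borel_measurable_const)
    have "N * \<epsilon> / 2 * prob Bad \<le> (\<Sum>\<alpha>\<in>E. prob (Bad \<inter> Z \<alpha>))"
      using E Z(1) Bads by (intro dc_lower) (auto simp: Bad_def cnt_def)
    also have "\<dots> \<le> (\<Sum>\<alpha>\<in>E. \<delta>)"
    proof (rule sum_mono)
      fix \<alpha> assume a: "\<alpha> \<in> E"
      have "prob (Bad \<inter> Z \<alpha>) \<le> prob (Z \<alpha>)" using Z(1)[OF a] by (intro finite_measure_mono) auto
      then show "prob (Bad \<inter> Z \<alpha>) \<le> \<delta>" using Z(2)[OF a] by linarith
    qed
    also have "\<dots> = N * \<delta>" unfolding N_def by simp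
    finally have "N * \<epsilon> / 2 * prob Bad \<le> N * \<delta>" .
    then have "\<epsilon> / 2 * prob Bad \<le> \<delta>" using Npos by (simp add: mult.assoc)
    then have "\<epsilon> / 2 * prob Bad \<le> \<epsilon> / 2 * (\<epsilon> / 2)" unfolding \<delta>_def by (simp add: field_simps)
    then have pBad: "prob Bad \<le> \<epsilon> / 2" using e by (simp add: mult_le_cancel_left_pos)
    define G where "G = space M - Bad"
    obtain D where D: "D \<subseteq> G" "finite D" "card D \<le> 2 ^ card (\<Union>F)"
      "\<forall>y\<in>G. \<exists>x\<in>D. \<forall>\<alpha>\<in>F. \<forall>A\<in>\<alpha>. x \<in> A \<longleftrightarrow> y \<in> A"
      using join_reps[OF F(1) Fp, of G] by blast
    have DG: "D \<subseteq> space M" using D(1) unfolding G_def by blast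
    define U where "U = (\<Union>x\<in>D. H_ball M E x \<epsilon>)"
    have EP: "E \<subseteq> parts M r" using E K by (meson order_trans)
    have Us: "U \<in> events" unfolding U_def using D(2)
      by (intro sets.finite_UN H_ball_sets[OF _ EP]) (use E in auto)
    have GU: "G \<subseteq> U"
    proof
      fix y assume y: "y \<in> G"
      then have ysp: "y \<in> space M" unfolding G_def by blast
      obtain x where x: "x \<in> D" "\<forall>\<alpha>\<in>F. \<forall>A\<in>\<alpha>. x \<in> A \<longleftrightarrow> y \<in> A" using D(4) y by blast
      have xsp: "x \<in> space M" "x \<in> G" using x(1) D(1) DG by auto
      have sub: "{\<alpha>\<in>E. \<not> (\<exists>A\<in>\<alpha>. x \<in> A \<and> y \<in> A)} \<subseteq> {\<alpha>\<in>E. x \<in> Z \<alpha>} \<union> {\<alpha>\<in>E. y \<in> Z \<alpha>}"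
      proof
        fix \<alpha> assume a: "\<alpha> \<in> {\<alpha>\<in>E. \<not> (\<exists>A\<in>\<alpha>. x \<in> A \<and> y \<in> A)}"
        show "\<alpha> \<in> {\<alpha>\<in>E. x \<in> Z \<alpha>} \<union> {\<alpha>\<in>E. y \<in> Z \<alpha>}"
        proof (rule ccontr)
          assume nz: "\<alpha> \<notin> {\<alpha>\<in>E. x \<in> Z \<alpha>} \<union> {\<alpha>\<in>E. y \<in> Z \<alpha>}"
          have aE: "\<alpha> \<in> E" using a by blast
          have btF: "bt \<alpha> \<in> F" using bt[OF aE] .
          then have btp: "bt \<alpha> \<in> parts M r" by (rule subsetD[OF K subsetD[OF F(2)]])
          obtain A where A: "A \<in> bt \<alpha>" "y \<in> A" using parts_D(4)[OF btp] ysp by blast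
          then have "x \<in> A" using x(2) btF by blast
          then have "same (bt \<alpha>) x y" unfolding same_def using A by blast
          then have "same \<alpha> x y" using Z(3)[OF aE] nz aE xsp ysp by blast
          then show False using a unfolding same_def by blast
        qed
      qed
      have "real (card {\<alpha>\<in>E. \<not> (\<exists>A\<in>\<alpha>. x \<in> A \<and> y \<in> A)}) \<le> real (card ({\<alpha>\<in>E. x \<in> Z \<alpha>} \<union> {\<alpha>\<in>E. y \<in> Z \<alpha>}))"
        using card_mono[OF _ sub] E by auto
      also have "\<dots> \<le> cnt x + cnt y" unfolding cnt_def
        using card_Un_le[of "{\<alpha>\<in>E. x \<in> Z \<alpha>}" "{\<alpha>\<in>E. y \<in> Z \<alpha>}"] by linarith
      also have "\<dots> < N * \<epsilon> / 2 + N * \<epsilon> / 2"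
        using xsp y ysp unfolding G_def Bad_def by (intro add_strict_mono) auto
      finally have "real (card {\<alpha>\<in>E. \<not> (\<exists>A\<in>\<alpha>. x \<in> A \<and> y \<in> A)}) < N * \<epsilon>" by simp
      then have "H_E E x y < \<epsilon>" unfolding H_E_def using Npos unfolding N_def
        by (simp add: divide_less_eq mult.commute)
      then show "y \<in> U" unfolding U_def H_ball_def using x(1) ysp by blast
    qed
    have pG: "prob G = 1 - prob Bad" unfolding G_def using Bads by (rule prob_compl)
    have "prob G \<le> prob U" by (rule finite_measure_mono[OF GU Us])
    then have "prob U > 1 - \<epsilon>" using pG pBad e by linarith
    then have "mean_complexity M E \<epsilon> \<le> card D" using D(2) DG unfolding U_def by (intro mc_le) auto
    then show "mean_complexity M E \<epsilon> \<le> 2 ^ card (\<Union>F)" using D(3) by linarith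
  qed
qed
end

context prob_space
begin

lemma mc_exists:
  assumes E: "finite E" "E \<subseteq> parts M r" and e: "e > 0"
  shows "\<exists>D. finite D \<and> D \<subseteq> space M \<and> card D = mean_complexity M E e \<and>
       measure M (\<Union>x\<in>D. H_ball M E x e) > 1 - e"
proof -
  have Ep: "\<forall>\<alpha>\<in>E. finite \<alpha>"
  proof
    fix \<alpha> assume "\<alpha> \<in> E"
    then show "finite \<alpha>" by (rule parts_D(1)[OF subsetD[OF E(2)]])
  qed
  obtain D0 where D0: "D0 \<subseteq> space M" "finite D0"
      "\<forall>y\<in>space M. \<exists>x\<in>D0. \<forall>\<alpha>\<in>E. \<forall>A\<in>\<alpha>. x \<in> A \<longleftrightarrow> y \<in> A"
    using join_reps[OF E(1) Ep, of "space M"] by blast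
  have "space M \<subseteq> (\<Union>x\<in>D0. H_ball M E x e)"
  proof
    fix y assume y: "y \<in> space M"
    then obtain x where x: "x \<in> D0" "\<forall>\<alpha>\<in>E. \<forall>A\<in>\<alpha>. x \<in> A \<longleftrightarrow> y \<in> A" using D0(3) by blast
    have z: "{\<alpha>\<in>E. \<not> (\<exists>A\<in>\<alpha>. x \<in> A \<and> y \<in> A)} = {}"
    proof (rule equals0I)
      fix \<alpha> assume a: "\<alpha> \<in> {\<alpha>\<in>E. \<not> (\<exists>A\<in>\<alpha>. x \<in> A \<and> y \<in> A)}"
      then have aE: "\<alpha> \<in> E" by blast
      have "\<alpha> \<in> parts M r" by (rule subsetD[OF E(2) aE])
      then obtain A where "A \<in> \<alpha>" "y \<in> A" using parts_D(4) y by blast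
      then show False using a x(2) aE by blast
    qed
    have "H_E E x y = 0" unfolding H_E_def z by simp
    then have "y \<in> H_ball M E x e" unfolding H_ball_def using y e by simp
    then show "y \<in> (\<Union>x\<in>D0. H_ball M E x e)" using x(1) by blast
  qed
  moreover have "(\<Union>x\<in>D0. H_ball M E x e) \<subseteq> space M" unfolding H_ball_def by auto
  ultimately have "(\<Union>x\<in>D0. H_ball M E x e) = space M" by blast
  then have "measure M (\<Union>x\<in>D0. H_ball M E x e) > 1 - e" using e prob_space by simp
  then have "\<exists>D. finite D \<and> D \<subseteq> space M \<and> card D = card D0 \<and>
       measure M (\<Union>x\<in>D. H_ball M E x e) > 1 - e" using D0 by blast
  then show ?thesis unfolding mean_complexity_def by (rule LeastI)
qed

lemma close_pair:
  assumes E: "finite E" "E \<subseteq> parts M r" and e: "e > 0"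
    and mc: "mean_complexity M E e \<le> C" and big: "real (card E) > 2 * 2 ^ (C * C)"
  shows "\<exists>\<alpha>\<in>E. \<exists>\<alpha>'\<in>E. \<alpha> \<noteq> \<alpha>' \<and> pclose M \<alpha> \<alpha>' (8 * e)"
proof -
  obtain D where D: "finite D" "D \<subseteq> space M" "card D = mean_complexity M E e"
    "measure M (\<Union>x\<in>D. H_ball M E x e) > 1 - e"
    using mc_exists[OF E e] by blast
  obtain xs where xs: "set xs = D" "distinct xs" using finite_distinct_list[OF D(1)] by blast
  define L where "L = length xs"
  have cardD: "card D = L" unfolding L_def using xs distinct_card by blast
  define x where "x i = xs ! i" for i
  have xD: "i < L \<Longrightarrow> x i \<in> D" for i unfolding x_def L_def using xs(1) by auto
  have xsp: "i < L \<Longrightarrow> x i \<in> space M" for i using xD D(2) by blast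
  define ball where "ball i = H_ball M E (x i) e" for i
  have balls: "ball i \<in> events" for i unfolding ball_def by (rule H_ball_sets[OF E])
  define V where "V i = ball i - (\<Union>j<i. ball j)" for i
  have Vs: "V i \<in> events" for i unfolding V_def using balls by (intro sets.Diff sets.finite_UN) auto
  define U where "U = (\<Union>i<L. ball i)"
  have U_eq: "U = (\<Union>x\<in>D. H_ball M E x e)"
  proof -
    have "D = x ` {..<L}" unfolding x_def L_def using xs(1) by (auto simp: in_set_conv_nth)
    then show ?thesis unfolding U_def ball_def by auto
  qed
  have Us: "U \<in> events" unfolding U_def using balls by auto
  have pU: "prob U > 1 - e" using D(4) U_eq by simp
  have Usp: "U \<subseteq> space M" using Us sets.sets_into_space by blast
  have inV: "\<exists>i<L. y \<in> V i" if y: "y \<in> U" for y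
  proof -
    obtain i where i: "i < L" "y \<in> ball i" using y unfolding U_def by blast
    define k where "k = (LEAST k. y \<in> ball k)"
    have k1: "y \<in> ball k" unfolding k_def using i(2) by (rule LeastI)
    have k2: "k \<le> i" unfolding k_def using i(2) by (rule Least_le)
    have k3: "j < k \<Longrightarrow> y \<notin> ball j" for j unfolding k_def using not_less_Least by blast
    have "y \<in> V k" unfolding V_def using k1 k3 by blast
    then show ?thesis using k2 i(1) by (intro exI[of _ k]) auto
  qed
  have Vball: "V i \<subseteq> ball i" for i unfolding V_def by blast
  have Vdisj: "disjoint_family_on V {..<L}"
  proof (unfold disjoint_family_on_def, intro ballI impI)
    fix i j assume "i \<in> {..<L}" "j \<in> {..<L}" "i \<noteq> j"
    then consider "i < j" | "j < i" by linarith
    then show "V i \<inter> V j = {}"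
    proof cases
      case 1 then show ?thesis unfolding V_def by blast
    next
      case 2 then show ?thesis unfolding V_def by blast
    qed
  qed
  have VU: "(\<Union>i<L. V i) \<subseteq> U" unfolding U_def using Vball by blast
  have sumV: "(\<Sum>i<L. prob (V i)) \<le> prob U"
  proof -
    have "(\<Sum>i<L. prob (V i)) = prob (\<Union>i<L. V i)"
      using Vs Vdisj by (intro finite_measure_finite_Union[symmetric]) auto
    also have "\<dots> \<le> prob U" using VU Us by (rule finite_measure_mono)
    finally show ?thesis .
  qed
  define S where "S i \<alpha> = space M - atomset \<alpha> (x i)" for i \<alpha>
  have Ss: "\<alpha> \<in> E \<Longrightarrow> S i \<alpha> \<in> events" for i \<alpha>
    unfolding S_def by (rule sets.Diff[OF sets.top], rule atomset_sets, rule subsetD[OF E(2)])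
  define B where "B \<alpha> = (space M - U) \<union> (\<Union>i<L. V i \<inter> S i \<alpha>)" for \<alpha>
  have Bs: "\<alpha> \<in> E \<Longrightarrow> B \<alpha> \<in> events" for \<alpha>
    unfolding B_def using Us Vs Ss by (intro sets.Un sets.Diff sets.top sets.finite_UN sets.Int) auto
  define N where "N = real (card E)"
  have "(0::real) < 2 * 2 ^ (C * C)" by simp
  then have Npos: "N > 0" using big unfolding N_def by linarith
  have pB: "prob (B \<alpha>) \<le> (1 - prob U) + (\<Sum>i<L. prob (V i \<inter> S i \<alpha>))" if a: "\<alpha> \<in> E" for \<alpha>
  proof -
    have "prob (B \<alpha>) \<le> prob (space M - U) + prob (\<Union>i<L. V i \<inter> S i \<alpha>)"
      unfolding B_def using Us Vs Ss[OF a] by (intro measure_Un_le) auto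
    also have "prob (\<Union>i<L. V i \<inter> S i \<alpha>) \<le> (\<Sum>i<L. prob (V i \<inter> S i \<alpha>))"
      using Vs Ss[OF a] by (intro measure_UNION_le) auto
    finally show ?thesis using prob_compl[OF Us] by simp
  qed
  have dcV: "(\<Sum>\<alpha>\<in>E. prob (V i \<inter> S i \<alpha>)) \<le> (N * e) * prob (V i)" if i: "i < L" for i
  proof (rule dc_upper[OF E(1) Ss Vs])
    fix y assume y: "y \<in> V i"
    then have yb: "y \<in> ball i" using Vball by blast
    then have ysp: "y \<in> space M" and H: "H_E E (x i) y < e" unfolding ball_def H_ball_def by auto
    have "{a\<in>E. y \<in> S i a} = {\<alpha>\<in>E. \<not> (\<exists>A\<in>\<alpha>. x i \<in> A \<and> y \<in> A)}"
      unfolding S_def using ysp by (auto simp: atomset_iff same_def)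
    moreover have "real (card {\<alpha>\<in>E. \<not> (\<exists>A\<in>\<alpha>. x i \<in> A \<and> y \<in> A)}) < N * e"
      using H Npos unfolding H_E_def N_def by (simp add: divide_less_eq mult.commute)
    ultimately show "real (card {a\<in>E. y \<in> S i a}) \<le> N * e" by simp
  qed
  have sumB: "(\<Sum>\<alpha>\<in>E. prob (B \<alpha>)) < 2 * N * e"
  proof -
    have "(\<Sum>\<alpha>\<in>E. prob (B \<alpha>)) \<le> (\<Sum>\<alpha>\<in>E. (1 - prob U) + (\<Sum>i<L. prob (V i \<inter> S i \<alpha>)))"
      by (intro sum_mono pB)
    also have "\<dots> = N * (1 - prob U) + (\<Sum>i<L. \<Sum>\<alpha>\<in>E. prob (V i \<inter> S i \<alpha>))"
      unfolding N_def by (simp add: sum.distrib sum.swap[of _ E])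
    also have "(\<Sum>i<L. \<Sum>\<alpha>\<in>E. prob (V i \<inter> S i \<alpha>)) \<le> (\<Sum>i<L. (N * e) * prob (V i))"
      by (intro sum_mono dcV) auto
    also have "\<dots> = (N * e) * (\<Sum>i<L. prob (V i))" by (simp add: sum_distrib_left)
    also have "\<dots> \<le> (N * e) * 1"
    proof (rule mult_left_mono)
      show "(\<Sum>i<L. prob (V i)) \<le> 1" using sumV prob_le_1[of U] by linarith
    qed (use Npos e in auto)
    finally have "(\<Sum>\<alpha>\<in>E. prob (B \<alpha>)) \<le> N * (1 - prob U) + N * e" by simp
    moreover have "N * (1 - prob U) < N * e" using pU Npos by simp
    ultimately show ?thesis by simp
  qed
  define Bigs where "Bigs = {\<alpha>\<in>E. prob (B \<alpha>) > 4 * e}"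
  have fBigs: "finite Bigs" unfolding Bigs_def using E(1) by simp
  have "4 * e * real (card Bigs) = (\<Sum>\<alpha>\<in>Bigs. 4 * e)" by simp
  also have "\<dots> \<le> (\<Sum>\<alpha>\<in>Bigs. prob (B \<alpha>))" unfolding Bigs_def by (intro sum_mono) auto
  also have "\<dots> \<le> (\<Sum>\<alpha>\<in>E. prob (B \<alpha>))" unfolding Bigs_def using E(1)
    by (intro sum_mono2) auto
  finally have "4 * e * real (card Bigs) < 2 * N * e" using sumB by simp
  then have cBigs: "real (card Bigs) < N / 2" using e by (simp add: field_simps)
  define Goods where "Goods = E - Bigs"
  have "card Goods = card E - card Bigs" unfolding Goods_def
    by (rule card_Diff_subset[OF fBigs]) (auto simp: Bigs_def)
  moreover have "card Bigs \<le> card E" unfolding Bigs_def using E(1) by (intro card_mono) auto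
  ultimately have "real (card Goods) = N - real (card Bigs)" unfolding N_def by simp
  then have cG: "real (card Goods) > 2 ^ (C * C)" using cBigs big unfolding N_def by simp
  have "card D \<le> C" using D(3) mc by simp
  then have "card D * card D \<le> C * C" by (intro mult_le_mono)
  then have "(2::nat) ^ (card D * card D) \<le> 2 ^ (C * C)" by (intro power_increasing) auto
  then have "card (Pow (D \<times> D)) \<le> (2::nat) ^ (C * C)" using D(1) by (simp add: card_Pow card_cartesian_product)
  then have "real (card (Pow (D \<times> D))) \<le> real ((2::nat) ^ (C * C))" by (rule of_nat_mono)
  then have "real (card (Pow (D \<times> D))) < real (card Goods)" using cG by simp
  then have cPow: "card (Pow (D \<times> D)) < card Goods" by (rule of_nat_less_imp_less)
  define pat where "pat \<alpha> = {(u, v) \<in> D \<times> D. same \<alpha> u v}" for \<alpha>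
  have "\<not> inj_on pat Goods"
  proof
    assume "inj_on pat Goods"
    then have "card Goods \<le> card (Pow (D \<times> D))"
      using D(1) by (intro card_inj_on_le) (auto simp: pat_def)
    then show False using cPow by simp
  qed
  then obtain \<alpha> \<alpha>' where aa: "\<alpha> \<in> Goods" "\<alpha>' \<in> Goods" "\<alpha> \<noteq> \<alpha>'" "pat \<alpha> = pat \<alpha>'"
    unfolding inj_on_def by blast
  have aE: "\<alpha> \<in> E" "\<alpha>' \<in> E" using aa unfolding Goods_def by auto
  have ap: "\<alpha> \<in> parts M r" "\<alpha>' \<in> parts M r" using aE by (auto intro: subsetD[OF E(2)])
  have pBa: "prob (B \<alpha>) \<le> 4 * e" "prob (B \<alpha>') \<le> 4 * e"
    using aa unfolding Goods_def Bigs_def by auto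
  have "pclose M \<alpha> \<alpha>' (8 * e)" unfolding pclose_def
  proof (intro bexI[of _ "B \<alpha> \<union> B \<alpha>'"] conjI ballI)
    show "B \<alpha> \<union> B \<alpha>' \<in> events" using Bs aE by auto
    have "prob (B \<alpha> \<union> B \<alpha>') \<le> prob (B \<alpha>) + prob (B \<alpha>')" using Bs aE by (intro measure_Un_le) auto
    then show "prob (B \<alpha> \<union> B \<alpha>') \<le> 8 * e" using pBa by simp
    have rep: "\<exists>i<L. same \<alpha> (x i) y \<and> same \<alpha>' (x i) y" if y: "y \<in> space M - (B \<alpha> \<union> B \<alpha>')" for y
    proof -
      have yU: "y \<in> U" using y unfolding B_def by blast
      then obtain i where i: "i < L" "y \<in> V i" using inV by blast
      have "y \<notin> S i \<alpha>" "y \<notin> S i \<alpha>'" using y i unfolding B_def by auto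
      then have "same \<alpha> (x i) y" "same \<alpha>' (x i) y" using y unfolding S_def by (auto simp: atomset_iff)
      then show ?thesis using i by blast
    qed
    fix y z assume y: "y \<in> space M - (B \<alpha> \<union> B \<alpha>')" and z: "z \<in> space M - (B \<alpha> \<union> B \<alpha>')"
    obtain i where i: "i < L" "same \<alpha> (x i) y" "same \<alpha>' (x i) y" using rep[OF y] by blast
    obtain j where j: "j < L" "same \<alpha> (x j) z" "same \<alpha>' (x j) z" using rep[OF z] by blast
    have eq1: "same \<beta> y z \<longleftrightarrow> same \<beta> (x i) (x j)"
      if b: "\<beta> \<in> parts M r" "same \<beta> (x i) y" "same \<beta> (x j) z" for \<beta>
      using same_trans[OF b(1)] same_sym b(2,3) by meson
    have "same \<alpha> (x i) (x j) \<longleftrightarrow> (x i, x j) \<in> pat \<alpha>" unfolding pat_def using xD i(1) j(1) by auto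
    also have "\<dots> \<longleftrightarrow> (x i, x j) \<in> pat \<alpha>'" using aa(4) by simp
    also have "\<dots> \<longleftrightarrow> same \<alpha>' (x i) (x j)" unfolding pat_def using xD i(1) j(1) by auto
    finally show "same \<alpha> y z \<longleftrightarrow> same \<alpha>' y z"
      using eq1[OF ap(1) i(2) j(2)] eq1[OF ap(2) i(3) j(3)] by simp
  qed
  then show ?thesis using aE aa(3) by blast
qed

end

context prob_space
begin

lemma tail_bound:
  assumes Z: "\<And>k. Z k \<in> events" "\<And>k. prob (Z k) \<le> (1/2) ^ k"
  shows "prob (\<Union>k. Z (k + N)) \<le> 2 * (1/2) ^ N"
proof -
  define g where "g k = (1/2::real) ^ N * (1/2) ^ k" for k
  have sg: "summable g" unfolding g_def by (intro summable_mult summable_geometric) simp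
  have fg: "prob (Z (k + N)) \<le> g k" for k using Z(2)[of "k + N"] unfolding g_def by (simp add: power_add mult.commute)
  have sf: "summable (\<lambda>k. prob (Z (k + N)))"
    by (rule summable_comparison_test'[OF sg]) (use fg in simp)
  have "prob (\<Union>k. Z (k + N)) \<le> (\<Sum>k. prob (Z (k + N)))"
    using Z(1) sf by (intro finite_measure_subadditive_countably) auto
  also have "\<dots> \<le> (\<Sum>k. g k)" using fg sf sg by (rule suminf_le)
  also have "\<dots> = (1/2) ^ N * 2" unfolding g_def
    by (subst suminf_mult) (auto intro: summable_geometric simp: suminf_geometric)
  finally show ?thesis by simp
qed

lemma cauchy_limit:
  assumes t: "\<And>k. t k \<in> parts M r" and c: "\<And>k. pclose M (t k) (t (Suc k)) ((1/2) ^ k)"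
  shows "\<exists>\<beta>\<in>parts M r. \<forall>N. pclose M (t N) \<beta> (2 * (1/2) ^ N)"
proof -
  have "\<forall>k. \<exists>Z. Z \<in> events \<and> prob Z \<le> (1/2) ^ k \<and>
     (\<forall>x\<in>space M - Z. \<forall>y\<in>space M - Z. same (t k) x y \<longleftrightarrow> same (t (Suc k)) x y)"
    using c unfolding pclose_def by blast
  then obtain Z where Z: "\<forall>k. Z k \<in> events \<and> prob (Z k) \<le> (1/2) ^ k \<and>
     (\<forall>x\<in>space M - Z k. \<forall>y\<in>space M - Z k. same (t k) x y \<longleftrightarrow> same (t (Suc k)) x y)"
    by (rule choice[THEN exE])
  have Zs: "\<And>k. Z k \<in> events" and pZ: "\<And>k. prob (Z k) \<le> (1/2) ^ k"
    and ag: "\<And>k x y. x \<in> space M - Z k \<Longrightarrow> y \<in> space M - Z k \<Longrightarrow> same (t k) x y \<longleftrightarrow> same (t (Suc k)) x y"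
    using Z by auto
  define W where "W N = space M - (\<Union>k. Z (k + N))" for N
  have Ws: "W N \<in> events" for N unfolding W_def using Zs by auto
  have Wsp: "W N \<subseteq> space M" for N unfolding W_def by auto
  have Wmono: "N \<le> N' \<Longrightarrow> W N \<subseteq> W N'" for N N'
  proof -
    assume "N \<le> N'"
    have "(\<Union>k. Z (k + N')) \<subseteq> (\<Union>k. Z (k + N))"
    proof
      fix z assume "z \<in> (\<Union>k. Z (k + N'))"
      then obtain k where k: "z \<in> Z (k + N')" by blast
      have "k + N' = (k + (N' - N)) + N" using \<open>N \<le> N'\<close> by simp
      then have "z \<in> Z ((k + (N' - N)) + N)" using k by simp
      then show "z \<in> (\<Union>k. Z (k + N))" by (rule UN_I[OF UNIV_I])
    qed
    then show ?thesis unfolding W_def by blast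
  qed
  have WZ: "x \<notin> Z k" if "x \<in> W N" "k \<ge> N" for x N k
  proof -
    have "Z k = Z ((k - N) + N)" using that(2) by simp
    then show ?thesis using that(1) unfolding W_def by blast
  qed
  have pW: "prob (space M - W N) \<le> 2 * (1/2) ^ N" for N
  proof -
    have "space M - W N = (\<Union>k. Z (k + N))" unfolding W_def using Zs sets.sets_into_space by blast
    then show ?thesis using tail_bound[OF Zs pZ, of N] by simp
  qed
  have const: "same (t k) x y \<longleftrightarrow> same (t N) x y" if "x \<in> W N" "y \<in> W N" "N \<le> k" for x y N k
    using that(3)
  proof (induction k rule: dec_induct)
    case (step k)
    have "x \<in> space M - Z k" "y \<in> space M - Z k" using that(1,2) WZ step(1) Wsp by blast+
    then show ?case using ag step(3) by blast
  qed simp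
  define R where "R x y \<longleftrightarrow> (\<exists>N. x \<in> W N \<and> y \<in> W N \<and> same (t N) x y)" for x y
  define Wall where "Wall = (\<Union>N. W N)"
  have Walls: "Wall \<in> events" unfolding Wall_def using Ws by auto
  have Rrefl: "R x x" if xW: "x \<in> Wall" for x
  proof -
    obtain N where N: "x \<in> W N" using xW unfolding Wall_def by blast
    then have "x \<in> space M" using Wsp by blast
    then have "same (t N) x x" by (rule same_refl[OF t])
    then show ?thesis unfolding R_def using N by blast
  qed
  have RW: "R x y \<Longrightarrow> x \<in> Wall \<and> y \<in> Wall" for x y unfolding R_def Wall_def by blast
  have Rsym: "R y x" if xy: "R x y" for x y
  proof -
    obtain N where N: "x \<in> W N" "y \<in> W N" "same (t N) x y" using xy unfolding R_def by blast
    then have "same (t N) y x" using same_sym[of "t N" x y] by simp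
    then show ?thesis unfolding R_def using N by blast
  qed
  have Rlift: "same (t N) x y" if Rxy: "R x y" "x \<in> W N" "y \<in> W N" for x y N
  proof -
    obtain N' where N': "x \<in> W N'" "y \<in> W N'" "same (t N') x y" using Rxy(1) unfolding R_def by blast
    define L where "L = max N N'"
    have "x \<in> W L" "y \<in> W L" using N' Wmono[of N' L] unfolding L_def by auto
    have "same (t L) x y" using const[OF N'(1,2), of L] N'(3) unfolding L_def by simp
    then show ?thesis using const[OF Rxy(2,3), of L] unfolding L_def by simp
  qed
  have Rtrans: "R x y \<Longrightarrow> R y z \<Longrightarrow> R x z" for x y z
  proof -
    assume xy: "R x y" and yz: "R y z"
    obtain N1 where N1: "x \<in> W N1" "y \<in> W N1" using xy unfolding R_def by blast
    obtain N2 where N2: "y \<in> W N2" "z \<in> W N2" using yz unfolding R_def by blast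
    define L where "L = max N1 N2"
    have L: "x \<in> W L" "y \<in> W L" "z \<in> W L" using N1 N2 Wmono[of N1 L] Wmono[of N2 L] unfolding L_def by auto
    have "same (t L) x y" by (rule Rlift[OF xy L(1,2)])
    moreover have "same (t L) y z" by (rule Rlift[OF yz L(2,3)])
    ultimately
    have "same (t L) x z" by (rule same_trans[OF t])
    then show "R x z" unfolding R_def using L by blast
  qed
  have "(2::real) * (1/2) ^ 2 = 1/2" by (simp add: power2_eq_square)
  then have "prob (space M - W 2) \<le> 1/2" using pW[of 2] by linarith
  moreover have "space M - (space M - W 2) = W 2" using Wsp by blast
  moreover have "prob (space M - (space M - W 2)) = 1 - prob (space M - W 2)"
    using Ws[of 2] by (intro prob_compl) auto
  ultimately have "prob (W 2) \<ge> 1/2" by simp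
  then have "W 2 \<noteq> {}" by auto
  then obtain x0 where x0: "x0 \<in> Wall" unfolding Wall_def by blast
  define key where "key x = (if x \<in> Wall then x else x0)" for x
  have keyW: "key x \<in> Wall" for x unfolding key_def using x0 by simp
  define R' where "R' x y \<longleftrightarrow> R (key x) (key y)" for x y
  have R'refl: "R' x x" for x unfolding R'_def using Rrefl keyW by blast
  have R'sym: "R' x y \<Longrightarrow> R' y x" for x y unfolding R'_def using Rsym by blast
  have R'trans: "R' x y \<Longrightarrow> R' y z \<Longrightarrow> R' x z" for x y z unfolding R'_def using Rtrans by blast
  define cls where "cls x = {y\<in>space M. R' x y}" for x
  define \<beta> where "\<beta> = cls ` space M"
  have cls_eq: "y \<in> cls x \<Longrightarrow> cls y = cls x" for x y
    unfolding cls_def using R'sym R'trans by blast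
  have same\<beta>: "same \<beta> x y \<longleftrightarrow> R' x y" if "x \<in> space M" "y \<in> space M" for x y
  proof
    assume "same \<beta> x y"
    then obtain z where "x \<in> cls z" "y \<in> cls z" unfolding same_def \<beta>_def by blast
    then show "R' x y" unfolding cls_def using R'sym R'trans by blast
  next
    assume "R' x y"
    then have "x \<in> cls x" "y \<in> cls x" unfolding cls_def using R'refl that by auto
    then show "same \<beta> x y" unfolding same_def \<beta>_def using that by blast
  qed
  have cls_sets: "cls x \<in> events" for x
  proof -
    define z where "z = key x"
    have zW: "z \<in> Wall" unfolding z_def by (rule keyW)
    define Rz where "Rz = (\<Union>N. if z \<in> W N then W N \<inter> atomset (t N) z else {})"
    have Rzs: "Rz \<in> events" unfolding Rz_def using Ws atomset_sets[OF t] by auto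
    have Rz_eq: "Rz = {y. R z y}"
      unfolding Rz_def R_def by (auto simp: atomset_iff split: if_splits)
    have "cls x = (Wall \<inter> Rz) \<union> (if R z x0 then space M - Wall else {})"
    proof -
      have "y \<in> cls x \<longleftrightarrow> y \<in> (Wall \<inter> Rz) \<union> (if R z x0 then space M - Wall else {})" for y
      proof (cases "y \<in> Wall")
        case True
        then have "y \<in> space M" using Wsp unfolding Wall_def by blast
        moreover have "key y = y" using True unfolding key_def by simp
        ultimately show ?thesis using True unfolding cls_def R'_def z_def Rz_eq by auto
      next
        case False
        moreover have "key y = x0" using False unfolding key_def by simp
        ultimately show ?thesis unfolding cls_def R'_def z_def Rz_eq by auto
      qed
      then show ?thesis by blast
    qed
    then show ?thesis using Walls Rzs by auto
  qed
  have clsin: "x \<in> space M \<Longrightarrow> x \<in> cls x" for x unfolding cls_def using R'refl by auto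
  have card_fin: "card F \<le> r" if F: "F \<subseteq> \<beta>" "finite F" for F
  proof -
    have "\<forall>c\<in>F. \<exists>x. x \<in> space M \<and> c = cls x" using F unfolding \<beta>_def by blast
    from bchoice[OF this] obtain xc where xc0: "\<forall>c\<in>F. xc c \<in> space M \<and> c = cls (xc c)"
      by (elim exE)
    have xc: "xc c \<in> space M \<and> c = cls (xc c)" if "c \<in> F" for c using xc0 that by blast
    define rep where "rep c = key (xc c)" for c
    have rep_in: "c \<in> F \<Longrightarrow> rep c \<in> c" for c
    proof -
      assume c: "c \<in> F"
      have "R' (xc c) (rep c)" unfolding R'_def rep_def key_def[of "key (xc c)"] using keyW Rrefl
        by (simp add: keyW)
      moreover have "rep c \<in> space M" unfolding rep_def using keyW Wsp unfolding Wall_def by blast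
      ultimately show "rep c \<in> c" using xc[OF c] unfolding cls_def by auto
    qed
    have "\<forall>c\<in>F. \<exists>N. rep c \<in> W N" using keyW unfolding rep_def Wall_def by blast
    from bchoice[OF this] obtain Nc where Nc0: "\<forall>c\<in>F. rep c \<in> W (Nc c)"
      by (elim exE)
    have Nc: "rep c \<in> W (Nc c)" if "c \<in> F" for c using Nc0 that by blast
    define N where "N = Max (insert 0 (Nc ` F))"
    have NW: "c \<in> F \<Longrightarrow> rep c \<in> W N" for c
      using Nc Wmono[of "Nc c" N] F(2) unfolding N_def by auto
    have "\<forall>c\<in>F. \<exists>A. A \<in> t N \<and> rep c \<in> A" using NW Wsp parts_D(4)[OF t[of N]] by blast
    from bchoice[OF this] obtain atm where atm0: "\<forall>c\<in>F. atm c \<in> t N \<and> rep c \<in> atm c"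
      by (elim exE)
    have atm: "atm c \<in> t N \<and> rep c \<in> atm c" if "c \<in> F" for c using atm0 that by blast
    have "inj_on atm F"
    proof (rule inj_onI)
      fix c c' assume c: "c \<in> F" "c' \<in> F" "atm c = atm c'"
      have "atm c \<in> t N" "rep c \<in> atm c" "rep c' \<in> atm c" using atm[OF c(1)] atm[OF c(2)] c(3) by auto
      then have "same (t N) (rep c) (rep c')" unfolding same_def by blast
      then have "R (rep c) (rep c')" unfolding R_def using NW c by blast
      moreover have "key (rep c) = rep c" "key (rep c') = rep c'"
        unfolding rep_def using keyW key_def by auto
      ultimately have "R' (rep c) (rep c')" unfolding R'_def by simp
      moreover have "rep c' \<in> space M" using NW[OF c(2)] Wsp by blast
      ultimately have "rep c' \<in> cls (rep c)" unfolding cls_def by blast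
      then have "cls (rep c') = cls (rep c)" by (rule cls_eq)
      moreover have "cls (rep c) = c"
      proof -
        have e: "c = cls (xc c)" using xc[OF c(1)] by blast
        have "rep c \<in> cls (xc c)" unfolding e[symmetric] by (rule rep_in[OF c(1)])
        then have "cls (rep c) = cls (xc c)" by (rule cls_eq)
        then show ?thesis using e by simp
      qed
      moreover have "cls (rep c') = c'"
      proof -
        have e: "c' = cls (xc c')" using xc[OF c(2)] by blast
        have "rep c' \<in> cls (xc c')" unfolding e[symmetric] by (rule rep_in[OF c(2)])
        then have "cls (rep c') = cls (xc c')" by (rule cls_eq)
        then show ?thesis using e by simp
      qed
      ultimately show "c = c'" by simp
    qed
    then have "card F \<le> card (t N)" using atm parts_D(1)[OF t[of N]]
      by (intro card_inj_on_le) auto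
    then show ?thesis using parts_D(2)[OF t[of N]] by simp
  qed
  have fin: "finite \<beta>"
  proof (rule ccontr)
    assume "infinite \<beta>"
    then obtain F where F: "F \<subseteq> \<beta>" "finite F" "card F = Suc r" by (meson infinite_arbitrarily_large)
    then show False using card_fin[OF F(1,2)] by simp
  qed
  have \<beta>p: "\<beta> \<in> parts M r" unfolding parts_def
  proof (intro CollectI conjI)
    show "finite \<beta>" by (rule fin)
    show "card \<beta> \<le> r" by (rule card_fin[OF subset_refl fin])
    show "\<beta> \<subseteq> events" unfolding \<beta>_def using cls_sets by (rule image_subsetI)
    show "\<Union>\<beta> = space M"
    proof
      show "\<Union>\<beta> \<subseteq> space M" unfolding \<beta>_def cls_def by auto
      show "space M \<subseteq> \<Union>\<beta>"
      proof
        fix x assume "x \<in> space M"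
        then have "x \<in> cls x" "cls x \<in> \<beta>" using clsin unfolding \<beta>_def by auto
        then show "x \<in> \<Union>\<beta>" by (rule UnionI[rotated])
      qed
    qed
    show "\<forall>A\<in>\<beta>. \<forall>B\<in>\<beta>. A \<noteq> B \<longrightarrow> A \<inter> B = {}"
    proof (intro ballI impI)
      fix A B assume A: "A \<in> \<beta>" and B: "B \<in> \<beta>" and ne: "A \<noteq> B"
      obtain a b where ab: "A = cls a" "B = cls b" using A B unfolding \<beta>_def by blast
      show "A \<inter> B = {}"
      proof (rule equals0I)
        fix z assume "z \<in> A \<inter> B"
        then have "cls z = cls a" "cls z = cls b" using cls_eq ab by auto
        then show False using ne ab by simp
      qed
    qed
  qed
  have "pclose M (t N) \<beta> (2 * (1/2) ^ N)" for N
    unfolding pclose_def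
  proof (intro bexI[of _ "space M - W N"] conjI ballI)
    show "space M - W N \<in> events" using Ws by auto
    show "prob (space M - W N) \<le> 2 * (1/2) ^ N" by (rule pW)
    fix x y assume x: "x \<in> space M - (space M - W N)" and y: "y \<in> space M - (space M - W N)"
    then have xy: "x \<in> W N" "y \<in> W N" "x \<in> space M" "y \<in> space M" by auto
    then have kk: "key x = x" "key y = y" unfolding key_def Wall_def by auto
    have "same \<beta> x y \<longleftrightarrow> R x y" using same\<beta>[OF xy(3,4)] kk unfolding R'_def by simp
    also have "\<dots> \<longleftrightarrow> same (t N) x y" using Rlift xy unfolding R_def by blast
    finally show "same (t N) x y \<longleftrightarrow> same \<beta> x y" by simp
  qed
  then show ?thesis using \<beta>p by blast
qed

end

context prob_space
begin

lemma seq_no_sep: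
  fixes u :: "nat \<Rightarrow> 'a set set"
  assumes K: "K \<subseteq> parts M r"
    and S3: "\<forall>s::nat \<Rightarrow> 'a set set. (\<forall>n. s n \<in> K) \<longrightarrow> seq_bounded_mean_complexity M s"
    and d: "\<delta> > 0" and u: "\<And>n. u n \<in> K"
  shows "\<exists>i j. i \<noteq> j \<and> pclose M (u i) (u j) \<delta>"
proof -
  define e where "e = \<delta> / 8"
  have e: "e > 0" unfolding e_def using d by simp
  have "seq_bounded_mean_complexity M u" using S3 u by blast
  then obtain C where C: "\<And>n. n \<ge> 1 \<Longrightarrow> mean_complexity M (u ` {1..n}) e \<le> C"
    unfolding seq_bounded_mean_complexity_def using e by blast
  define n :: nat where "n = 2 * 2 ^ (C * C) + 1"
  define E where "E = u ` {1..n}"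
  have fE: "finite E" unfolding E_def by simp
  have EP: "E \<subseteq> parts M r" unfolding E_def using u K by blast
  show ?thesis
  proof (cases "real (card E) > 2 * 2 ^ (C * C)")
    case True
    have "mean_complexity M E e \<le> C" unfolding E_def by (rule C) (simp add: n_def)
    from close_pair[OF fE EP e this True]
    obtain a a' where aa: "a \<in> E" "a' \<in> E" "a \<noteq> a'" "pclose M a a' (8 * e)" by blast
    then obtain i j where ij: "a = u i" "a' = u j" unfolding E_def by blast
    then have "i \<noteq> j" using aa(3) by blast
    moreover have "pclose M (u i) (u j) \<delta>" using aa(4) ij unfolding e_def by simp
    ultimately show ?thesis by blast
  next
    case False
    then have "real (card E) \<le> real (2 * 2 ^ (C * C))" by simp
    then have "card E \<le> 2 * 2 ^ (C * C)" unfolding of_nat_le_iff .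
    then have "card E < card {1..n}" unfolding n_def by simp
    then have "\<not> inj_on u {1..n}" unfolding E_def using card_image by fastforce
    then obtain i j where ij: "i \<noteq> j" "u i = u j" unfolding inj_on_def by blast
    have "pclose M (u i) (u j) \<delta>" unfolding ij(2) using d by (intro pclose_self) simp
    then show ?thesis using ij(1) by blast
  qed
qed

lemma ramsey_step:
  fixes s :: "nat \<Rightarrow> 'a set set"
  assumes K: "K \<subseteq> parts M r"
    and S3: "\<forall>s::nat \<Rightarrow> 'a set set. (\<forall>n. s n \<in> K) \<longrightarrow> seq_bounded_mean_complexity M s"
    and d: "\<delta> > 0" and s: "\<And>n. s n \<in> K" and S: "infinite (S :: nat set)"
  shows "\<exists>S'. S' \<subseteq> S \<and> infinite S' \<and> (\<forall>i\<in>S'. \<forall>j\<in>S'. i \<noteq> j \<longrightarrow> pclose M (s i) (s j) \<delta>)"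
proof -
  define f where "f P = (if \<forall>i\<in>P. \<forall>j\<in>P. pclose M (s i) (s j) \<delta> then 0 else 1::nat)" for P
  have "\<forall>x\<in>S. \<forall>y\<in>S. x \<noteq> y \<longrightarrow> f {x, y} < 2" unfolding f_def by simp
  from Ramsey2[OF S this] obtain Y t where Y: "Y \<subseteq> S" "infinite Y" "t < 2"
    "\<forall>x\<in>Y. \<forall>y\<in>Y. x \<noteq> y \<longrightarrow> f {x, y} = t" by blast
  have selfc: "pclose M (s i) (s i) \<delta>" for i using d by (intro pclose_self) simp
  show ?thesis
  proof (cases "t = 0")
    case True
    have "pclose M (s x) (s y) \<delta>" if "x \<in> Y" "y \<in> Y" "x \<noteq> y" for x y
      using Y(4) that True unfolding f_def by (auto split: if_splits)
    then show ?thesis using Y by blast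
  next
    case False
    then have t1: "t = 1" using Y(3) by simp
    have nc: "\<not> pclose M (s x) (s y) \<delta>" if "x \<in> Y" "y \<in> Y" "x \<noteq> y" for x y
    proof
      assume c: "pclose M (s x) (s y) \<delta>"
      then have "pclose M (s y) (s x) \<delta>" by (rule pclose_sym)
      then have "f {x, y} = 0" unfolding f_def using c selfc by auto
      then show False using Y(4) that t1 by auto
    qed
    define e where "e = enumerate Y"
    have eY: "e n \<in> Y" for n unfolding e_def using Y(2) by (rule enumerate_in_set)
    have em: "strict_mono e" unfolding e_def using Y(2) by (rule strict_mono_enumerate)
    obtain i j where ij: "i \<noteq> j" "pclose M (s (e i)) (s (e j)) \<delta>"
      using seq_no_sep[OF K S3 d, of "\<lambda>n. s (e n)"] s by blast
    have "e i \<noteq> e j" using em ij(1) strict_mono_eq by blast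
    then show ?thesis using nc[OF eY eY] ij(2) by blast
  qed
qed

lemma cauchy_subseq:
  fixes s :: "nat \<Rightarrow> 'a set set"
  assumes K: "K \<subseteq> parts M r"
    and S3: "\<forall>s::nat \<Rightarrow> 'a set set. (\<forall>n. s n \<in> K) \<longrightarrow> seq_bounded_mean_complexity M s"
    and s: "\<And>n. s n \<in> K"
  shows "\<exists>\<phi>. strict_mono \<phi> \<and> (\<forall>k. pclose M (s (\<phi> k)) (s (\<phi> (Suc k))) ((1/2) ^ k))"
proof -
  define P where "P \<delta> S' \<longleftrightarrow> infinite S' \<and> (\<forall>i\<in>S'. \<forall>j\<in>S'. i \<noteq> j \<longrightarrow> pclose M (s i) (s j) \<delta>)"
    for \<delta> and S' :: "nat set"
  define sel where "sel \<delta> S = (SOME S'. S' \<subseteq> S \<and> P \<delta> S')" for \<delta> S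
  have sel: "sel \<delta> S \<subseteq> S \<and> P \<delta> (sel \<delta> S)" if "\<delta> > 0" "infinite S" for \<delta> S
  proof -
    have "\<exists>S'. S' \<subseteq> S \<and> P \<delta> S'" unfolding P_def by (rule ramsey_step[OF K S3 that(1) s that(2)])
    then show ?thesis unfolding sel_def by (rule someI_ex)
  qed
  define Sq where "Sq = rec_nat (sel 1 UNIV) (\<lambda>k S. sel ((1/2) ^ Suc k) S)"
  have Sq0: "Sq 0 = sel 1 UNIV" and SqS: "Sq (Suc k) = sel ((1/2) ^ Suc k) (Sq k)" for k
    unfolding Sq_def by simp_all
  have SqP: "P ((1/2) ^ k) (Sq k)" for k
  proof (induction k)
    case 0 then show ?case using sel[of 1 UNIV] by (simp add: Sq0)
  next
    case (Suc k)
    then have "infinite (Sq k)" unfolding P_def by blast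
    then show ?case using sel[of "(1/2) ^ Suc k" "Sq k"] by (simp add: SqS)
  qed
  have Sqsub: "Sq (Suc k) \<subseteq> Sq k" for k
  proof -
    have "infinite (Sq k)" using SqP[of k] unfolding P_def by blast
    then show ?thesis using sel[of "(1/2) ^ Suc k" "Sq k"] by (simp add: SqS)
  qed
  have Sqinf: "infinite (Sq k)" for k using SqP[of k] unfolding P_def by blast
  define \<phi> where "\<phi> = rec_nat (LEAST x. x \<in> Sq 0) (\<lambda>k m. LEAST x. x \<in> Sq (Suc k) \<and> m < x)"
  have \<phi>0: "\<phi> 0 = (LEAST x. x \<in> Sq 0)" and \<phi>S: "\<phi> (Suc k) = (LEAST x. x \<in> Sq (Suc k) \<and> \<phi> k < x)" for k
    unfolding \<phi>_def by simp_all
  have ex: "\<exists>x. x \<in> Sq (Suc k) \<and> \<phi> k < x" for k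
    using Sqinf[of "Suc k"] unfolding infinite_nat_iff_unbounded by blast
  have \<phi>Sp: "\<phi> (Suc k) \<in> Sq (Suc k) \<and> \<phi> k < \<phi> (Suc k)" for k
    unfolding \<phi>S by (rule LeastI_ex[OF ex])
  have ex0: "\<exists>x. x \<in> Sq 0" using Sqinf[of 0] infinite_imp_nonempty by blast
  have \<phi>0in: "\<phi> 0 \<in> Sq 0" unfolding \<phi>0 by (rule LeastI_ex[OF ex0])
  have \<phi>in: "\<phi> k \<in> Sq k" for k
  proof (cases k)
    case 0 then show ?thesis using \<phi>0in by simp
  next
    case (Suc k') then show ?thesis using \<phi>Sp[of k'] by simp
  qed
  have \<phi>lt: "\<phi> k < \<phi> (Suc k)" for k using \<phi>Sp[of k] by simp
  have \<phi>in2: "\<phi> (Suc k) \<in> Sq (Suc k)" for k using \<phi>Sp[of k] by simp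
  have "strict_mono \<phi>" by (rule strict_mono_Suc_iff[THEN iffD2]) (use \<phi>lt in blast)
  moreover have "pclose M (s (\<phi> k)) (s (\<phi> (Suc k))) ((1/2) ^ k)" for k
  proof -
    have "\<phi> (Suc k) \<in> Sq k" using \<phi>in2[of k] Sqsub[of k] by blast
    moreover have "\<phi> k \<noteq> \<phi> (Suc k)" using \<phi>lt[of k] by simp
    moreover have "\<forall>i\<in>Sq k. \<forall>j\<in>Sq k. i \<noteq> j \<longrightarrow> pclose M (s i) (s j) ((1/2) ^ k)"
      using SqP[of k] unfolding P_def by (elim conjE)
    ultimately show ?thesis using \<phi>in[of k] by simp
  qed
  ultimately show ?thesis by blast
qed

end

context prob_space
begin

lemma S3_imp_precompact:
  assumes K: "K \<subseteq> parts M r"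
    and S3: "\<forall>s::nat \<Rightarrow> 'a set set. (\<forall>n. s n \<in> K) \<longrightarrow> seq_bounded_mean_complexity M s"
  shows "precompact_parts M r K"
  unfolding precompact_parts_def
proof (intro allI impI)
  fix s :: "nat \<Rightarrow> 'a set set" assume s: "\<forall>n. s n \<in> K"
  then have s': "\<And>n. s n \<in> K" by blast
  obtain \<phi> where \<phi>: "strict_mono \<phi>" "\<forall>k. pclose M (s (\<phi> k)) (s (\<phi> (Suc k))) ((1/2) ^ k)"
    using cauchy_subseq[where s=s, OF K S3 s'] by blast
  define t where "t k = s (\<phi> k)" for k
  have t: "t k \<in> parts M r" for k unfolding t_def using s' K by blast
  have c: "pclose M (t k) (t (Suc k)) ((1/2) ^ k)" for k unfolding t_def using \<phi>(2) by blast
  obtain \<beta> where \<beta>: "\<beta> \<in> parts M r" "\<forall>N. pclose M (t N) \<beta> (2 * (1/2) ^ N)"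
    using cauchy_limit[OF t c] by blast
  define \<eta> where "\<eta> N = 2 * (1/2::real) ^ N" for N
  define g where "g N = 2 * (real r * real r * (\<eta> N + 2 * sqrt (\<eta> N)))" for N
  have le: "rokhlin M (t N) \<beta> \<le> g N" for N
    unfolding g_def \<eta>_def by (rule pclose_rokhlin[OF t \<beta>(1)]) (use \<beta>(2) in blast)
  have ge: "0 \<le> rokhlin M (t N) \<beta>" for N
    unfolding rokhlin_def using cond_entropy_nonneg[OF t] cond_entropy_nonneg[OF \<beta>(1)]
    by (simp add: add_nonneg_nonneg)
  have "(\<lambda>N. 2 * (1/2::real) ^ N) \<longlonglongrightarrow> 2 * 0"
    by (intro tendsto_intros LIMSEQ_power_zero) simp
  then have \<eta>0: "\<eta> \<longlonglongrightarrow> 0" unfolding \<eta>_def by simp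
  have "g \<longlonglongrightarrow> 2 * (real r * real r * (0 + 2 * sqrt 0))"
    unfolding g_def by (intro tendsto_intros \<eta>0)
  then have g0: "g \<longlonglongrightarrow> 0" by simp
  have "(\<lambda>N. rokhlin M (t N) \<beta>) \<longlonglongrightarrow> 0"
    by (rule real_tendsto_sandwich[OF _ _ tendsto_const g0]) (use le ge in auto)
  then show "\<exists>\<phi> \<beta>. strict_mono \<phi> \<and> \<beta> \<in> parts M r \<and> (\<lambda>n. rokhlin M (s (\<phi> n)) \<beta>) \<longlonglongrightarrow> 0"
    using \<phi>(1) \<beta>(1) unfolding t_def by blast
qed

end

theorem proposition3p4:
  fixes M :: "'a::polish_space measure" and r :: nat and K :: "'a set set set"
  assumes "standard_prob_space M" and "r \<ge> 2" and "K \<subseteq> parts M r"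
  shows "(precompact_parts M r K \<longleftrightarrow> bounded_mean_complexity M K)
       \<and> (bounded_mean_complexity M K \<longleftrightarrow>
            (\<forall>s::nat \<Rightarrow> 'a set set. (\<forall>n. s n \<in> K) \<longrightarrow> seq_bounded_mean_complexity M s))"
proof -
  have ps: "prob_space M" using assms(1) unfolding standard_prob_space_def by blast
  interpret prob_space M by (rule ps)
  have 12: "bounded_mean_complexity M K" if pc: "precompact_parts M r K"
    unfolding bounded_mean_complexity_def
  proof (intro allI impI)
    fix e :: real assume e: "e > 0"
    show "\<exists>C::nat. \<forall>E. finite E \<and> E \<noteq> {} \<and> E \<subseteq> K \<longrightarrow> mean_complexity M E e \<le> C"
    proof (rule bmc_from_net[OF assms(3) _ e])
      fix \<delta> :: real assume "\<delta> > 0"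
      then show "\<exists>F. finite F \<and> F \<subseteq> K \<and> (\<forall>\<alpha>\<in>K. \<exists>\<beta>\<in>F. pclose M \<alpha> \<beta> \<delta>)"
        by (rule net_from_precompact[OF pc assms(3)])
    qed
  qed
  have 23: "\<forall>s::nat \<Rightarrow> 'a set set. (\<forall>n. s n \<in> K) \<longrightarrow> seq_bounded_mean_complexity M s"
    if b: "bounded_mean_complexity M K"
  proof (intro allI impI)
    fix s :: "nat \<Rightarrow> 'a set set" assume s: "\<forall>n. s n \<in> K"
    show "seq_bounded_mean_complexity M s" unfolding seq_bounded_mean_complexity_def
    proof (intro allI impI)
      fix e :: real assume e: "e > 0"
      obtain C where C: "\<forall>E. finite E \<and> E \<noteq> {} \<and> E \<subseteq> K \<longrightarrow> mean_complexity M E e \<le> C"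
        using b e unfolding bounded_mean_complexity_def by blast
      have "mean_complexity M (s ` {1..n}) e \<le> C" if n: "n \<ge> 1" for n
      proof -
        have "finite (s ` {1..n})" "s ` {1..n} \<noteq> {}" "s ` {1..n} \<subseteq> K" using n s by auto
        then show ?thesis using C by blast
      qed
      then show "\<exists>C. \<forall>n\<ge>1. mean_complexity M (s ` {1..n}) e \<le> C" by blast
    qed
  qed
  have 31: "precompact_parts M r K"
    if S3: "\<forall>s::nat \<Rightarrow> 'a set set. (\<forall>n. s n \<in> K) \<longrightarrow> seq_bounded_mean_complexity M s"
    by (rule S3_imp_precompact[OF assms(3) S3])
  show ?thesis using 12 23 31 by blast
qed

end
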